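(* Let $M>1$ be a real number, let $\alpha:(0,M)\to[0,\infty)$ be a log-concave function, and let \[ f(x)=\int_{0}^{M}\alpha(s)\binom{M}{s}(1-x)^{s}x^{M-s}\,ds,\qquad x\in(0,1). \] Then for every $x\in(0,1)$, \[ \frac{M-1}{M}\,f'(x)^{2}\;\ge\; f(x)\,f''(x). \]
   Context: A non-negative function $h$ on an open interval $I$ is called log-concave if for all $x,y\in I$ and all $0<\lambda<1$, $h(\lambda x+(1-\lambda)y)\ge h(x)^{\lambda}h(y)^{1-\lambda}$. For real $a$ and $s$, $\binom{a}{s}=\frac{\Gamma(a+1)}{\Gamma(s+1)\Gamma(a-s+1)}$, where $\Gamma$ is the Gamma function. *)

theory Defs
  imports "HOL-Analysis.Analysis"
begin

definition rbinom :: "real \<Rightarrow> real \<Rightarrow> real" where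
  "rbinom a s = Gamma (a + 1) / (Gamma (s + 1) * Gamma (a - s + 1))"

definition log_concave_on :: "real set \<Rightarrow> (real \<Rightarrow> real) \<Rightarrow> bool" where
  "log_concave_on I h \<longleftrightarrow>
     (\<forall>x\<in>I. h x \<ge> 0) \<and>
     (\<forall>x\<in>I. \<forall>y\<in>I. \<forall>l. 0 < l \<and> l < 1 \<longrightarrow>
        h (l * x + (1 - l) * y) \<ge> h x powr l * h y powr (1 - l))"

end

theory Submission
  imports Defs
begin


lemma lc_nonneg: "log_concave_on S \<phi> \<Longrightarrow> s \<in> S \<Longrightarrow> 0 \<le> \<phi> s"
  unfolding log_concave_on_def by auto

lemma lc_ineq: "log_concave_on S \<phi> \<Longrightarrow> p \<in> S \<Longrightarrow> q \<in> S \<Longrightarrow> 0 < l \<Longrightarrow> l < 1 \<Longrightarrow>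
   \<phi> p powr l * \<phi> q powr (1 - l) \<le> \<phi> (l * p + (1 - l) * q)"
  unfolding log_concave_on_def by auto

lemma powr_geom_ge_min:
  fixes a b l :: real
  assumes "0 \<le> a" "0 \<le> b" "0 < l" "l < 1"
  shows "min a b \<le> a powr l * b powr (1 - l)"
proof (cases "min a b = 0")
  case True
  then show ?thesis using assms by auto
next
  case False
  define m where "m = min a b"
  have m: "0 < m" "m \<le> a" "m \<le> b" using False assms unfolding m_def by auto
  have "m = m powr l * m powr (1 - l)" using m by (simp add: powr_add[symmetric])
  also have "\<dots> \<le> a powr l * b powr (1 - l)"
    using m assms by (intro mult_mono powr_mono2) auto
  finally show ?thesis unfolding m_def .
qed

lemma lc_quasi:
  assumes "log_concave_on S \<phi>" "p \<in> S" "q \<in> S" "0 < l" "l < 1"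
  shows "min (\<phi> p) (\<phi> q) \<le> \<phi> (l * p + (1 - l) * q)"
  using powr_geom_ge_min[of "\<phi> p" "\<phi> q" l] lc_nonneg[OF assms(1)] lc_ineq[OF assms] assms
  by force

lemma lc_mult:
  assumes "log_concave_on S \<phi>" "log_concave_on S \<psi>"
  shows "log_concave_on S (\<lambda>s. \<phi> s * \<psi> s)"
  unfolding log_concave_on_def
proof (intro conjI ballI allI impI)
  fix x :: real assume "x \<in> S" then show "0 \<le> \<phi> x * \<psi> x" using assms lc_nonneg by auto
next
  fix x y l :: real assume xy: "x \<in> S" "y \<in> S" and l: "0 < l \<and> l < 1"
  have lc0: "0 \<le> \<phi> (l * x + (1 - l) * y)"
    using lc_ineq[OF assms(1) xy, of l] l
    by (meson mult_nonneg_nonneg order_trans powr_ge_zero)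
  have "(\<phi> x * \<psi> x) powr l * (\<phi> y * \<psi> y) powr (1 - l)
      = (\<phi> x powr l * \<phi> y powr (1 - l)) * (\<psi> x powr l * \<psi> y powr (1 - l))"
    by (simp add: powr_mult mult_ac)
  also have "\<dots> \<le> \<phi> (l * x + (1 - l) * y) * \<psi> (l * x + (1 - l) * y)"
    using l xy assms lc0 by (intro mult_mono lc_ineq) auto
  finally show "(\<phi> x * \<psi> x) powr l * (\<phi> y * \<psi> y) powr (1 - l)
      \<le> \<phi> (l * x + (1 - l) * y) * \<psi> (l * x + (1 - l) * y)" .
qed

lemma lc_subset: "log_concave_on S \<phi> \<Longrightarrow> T \<subseteq> S \<Longrightarrow> log_concave_on T \<phi>"
  unfolding log_concave_on_def by blast

lemma lc_exp: "log_concave_on S (\<lambda>s. exp (c * s + d))"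
  unfolding log_concave_on_def
proof (intro conjI ballI allI impI)
  fix x y l :: real
  show "exp (c * x + d) powr l * exp (c * y + d) powr (1 - l) \<le> exp (c * (l * x + (1 - l) * y) + d)"
    by (simp add: powr_def exp_add[symmetric] algebra_simps)
qed auto

lemma lc_const: "0 \<le> C \<Longrightarrow> log_concave_on S (\<lambda>s. C)"
  unfolding log_concave_on_def
proof (intro conjI ballI allI impI)
  fix x y l :: real assume "0 \<le> C" "0 < l \<and> l < 1"
  then show "C powr l * C powr (1 - l) \<le> C"
    by (cases "C = 0") (auto simp: powr_add[symmetric])
qed auto

lemma Gamma_lc:
  fixes x y l :: real
  assumes "0 < x" "0 < y" "0 \<le> l" "l \<le> 1"
  shows "Gamma (l * x + (1 - l) * y) \<le> Gamma x powr l * Gamma y powr (1 - l)"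
proof -
  have "(ln \<circ> Gamma) ((1 - (1 - l)) *\<^sub>R x + (1 - l) *\<^sub>R y) \<le> (1 - (1 - l)) * (ln \<circ> Gamma) x + (1 - l) * (ln \<circ> Gamma) y"
    using assms by (intro convex_onD[OF log_convex_Gamma_real]) auto
  then have "ln (Gamma (l * x + (1 - l) * y)) \<le> l * ln (Gamma x) + (1 - l) * ln (Gamma y)" by simp
  then have "exp (ln (Gamma (l * x + (1 - l) * y))) \<le> exp (l * ln (Gamma x) + (1 - l) * ln (Gamma y))"
    by simp
  moreover have "0 < l * x + (1 - l) * y"
  proof (cases "l = 0")
    case True then show ?thesis using assms by simp
  next
    case False then show ?thesis using assms by (intro add_pos_nonneg) auto
  qed
  ultimately show ?thesis
    using Gamma_real_pos[OF assms(1)] Gamma_real_pos[OF assms(2)] Gamma_real_pos[of "l * x + (1 - l) * y"]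
    by (simp add: powr_def exp_add)
qed

lemma lc_rGamma1:
  assumes "\<forall>s\<in>S. 0 < s + u"
  shows "log_concave_on S (\<lambda>s. 1 / Gamma (s + u))"
  unfolding log_concave_on_def
proof (intro conjI ballI allI impI)
  fix x :: real assume "x \<in> S" then show "0 \<le> 1 / Gamma (x + u)" using assms Gamma_real_pos[of "x+u"] by auto
next
  fix x y l :: real assume xy: "x \<in> S" "y \<in> S" and l: "0 < l \<and> l < 1"
  have px: "0 < Gamma (x + u)" "0 < Gamma (y + u)" using xy assms Gamma_real_pos by auto
  have "Gamma (l * (x + u) + (1 - l) * (y + u)) \<le> Gamma (x + u) powr l * Gamma (y + u) powr (1 - l)"
    using xy assms l by (intro Gamma_lc) auto
  moreover have "l * (x + u) + (1 - l) * (y + u) = l * x + (1 - l) * y + u" by algebra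
  moreover have "0 < l * (x + u) + (1 - l) * (y + u)"
    using xy assms l by (rule_tac add_pos_pos; rule_tac mult_pos_pos) auto
  then have "0 < l * x + (1 - l) * y + u" by (simp add: algebra_simps)
  ultimately have "1 / (Gamma (x + u) powr l * Gamma (y + u) powr (1 - l)) \<le> 1 / Gamma (l * x + (1 - l) * y + u)"
    using Gamma_real_pos[of "l * x + (1 - l) * y + u"] px by (intro divide_left_mono) auto
  then show "(1 / Gamma (x + u)) powr l * (1 / Gamma (y + u)) powr (1 - l) \<le> 1 / Gamma (l * x + (1 - l) * y + u)"
    using px by (simp add: powr_divide)
qed

lemma lc_rGamma2:
  assumes "\<forall>s\<in>S. 0 < v - s"
  shows "log_concave_on S (\<lambda>s. 1 / Gamma (v - s))"
  unfolding log_concave_on_def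
proof (intro conjI ballI allI impI)
  fix x :: real assume "x \<in> S" then show "0 \<le> 1 / Gamma (v - x)" using assms Gamma_real_pos[of "v - x"] by auto
next
  fix x y l :: real assume xy: "x \<in> S" "y \<in> S" and l: "0 < l \<and> l < 1"
  have px: "0 < Gamma (v - x)" "0 < Gamma (v - y)" using xy assms Gamma_real_pos by auto
  have "Gamma (l * (v - x) + (1 - l) * (v - y)) \<le> Gamma (v - x) powr l * Gamma (v - y) powr (1 - l)"
    using xy assms l by (intro Gamma_lc) auto
  moreover have "l * (v - x) + (1 - l) * (v - y) = v - (l * x + (1 - l) * y)" by algebra
  moreover have "0 < l * (v - x) + (1 - l) * (v - y)"
    using xy assms l by (rule_tac add_pos_pos; rule_tac mult_pos_pos) auto
  then have "0 < v - (l * x + (1 - l) * y)" by (simp add: algebra_simps)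
  ultimately have "1 / (Gamma (v - x) powr l * Gamma (v - y) powr (1 - l)) \<le> 1 / Gamma (v - (l * x + (1 - l) * y))"
    using Gamma_real_pos[of "v - (l * x + (1 - l) * y)"] px by (intro divide_left_mono) auto
  then show "(1 / Gamma (v - x)) powr l * (1 / Gamma (v - y)) powr (1 - l) \<le> 1 / Gamma (v - (l * x + (1 - l) * y))"
    using px by (simp add: powr_divide)
qed


lemma lc_between:
  assumes "log_concave_on {lo<..<hi} \<phi>" "a \<in> {lo<..<hi}" "b \<in> {lo<..<hi}" "a \<le> x" "x \<le> b"
  shows "min (\<phi> a) (\<phi> b) \<le> \<phi> x"
proof (cases "x = a \<or> x = b")
  case True then show ?thesis by auto
next
  case False
  then have ab: "a < x" "x < b" using assms by auto
  define l where "l = (b - x) / (b - a)"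
  have l: "0 < l" "l < 1" using ab unfolding l_def by (auto simp: field_simps)
  have e1: "l * (b - a) = b - x" using ab unfolding l_def by auto
  have "l * a + (1 - l) * b = b - l * (b - a)" by algebra
  then have "l * a + (1 - l) * b = x" using e1 by simp
  then show ?thesis using lc_quasi[OF assms(1-3) l] by simp
qed

lemma lc_level_interval:
  assumes "log_concave_on {lo<..<hi} \<phi>"
  shows "is_interval {s. t < indicator {lo<..<hi} s * \<phi> s}"
  unfolding is_interval_1
proof (intro ballI allI impI)
  fix a b x assume a: "a \<in> {s. t < indicator {lo<..<hi} s * \<phi> s}" and b: "b \<in> {s. t < indicator {lo<..<hi} s * \<phi> s}"
    and x: "a \<le> x \<and> x \<le> b"
  have nn: "\<And>s. 0 \<le> indicator {lo<..<hi} s * \<phi> s"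
    using lc_nonneg[OF assms] by (auto simp: indicator_def)
  show "x \<in> {s. t < indicator {lo<..<hi} s * \<phi> s}"
  proof (cases "t < 0")
    case True then show ?thesis using nn[of x] by auto
  next
    case False
    have ain0: "a \<in> {lo<..<hi}" using a False by (cases "a \<in> {lo<..<hi}") auto
    have bin0: "b \<in> {lo<..<hi}" using b False by (cases "b \<in> {lo<..<hi}") auto
    have ain: "a \<in> {lo<..<hi}" "t < \<phi> a" and bin: "b \<in> {lo<..<hi}" "t < \<phi> b"
      using a b ain0 bin0 by auto
    have xin: "x \<in> {lo<..<hi}" using ain bin x by auto
    have "min (\<phi> a) (\<phi> b) \<le> \<phi> x" using lc_between[OF assms ain(1) bin(1)] x by auto
    then show ?thesis using ain bin xin by (auto simp: indicator_def)
  qed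
qed

lemma lc_measurable:
  assumes "log_concave_on {lo<..<hi} \<phi>"
  shows "(\<lambda>s. indicator {lo<..<hi} s * \<phi> s) \<in> borel_measurable borel"
  unfolding borel_measurable_iff_greater
  using lc_level_interval[OF assms] real_interval_borel_measurable by auto

lemma lc_side:
  assumes lc: "log_concave_on S \<phi>" and p: "p \<in> S" and s: "s \<in> S" and l: "0 < l" "l < 1"
    and pp: "0 < \<phi> p" and k: "0 < \<kappa>" "\<kappa> \<le> 1 - l"
  shows "\<phi> s \<le> (max 1 (\<phi> (l * p + (1 - l) * s)) / min 1 (\<phi> p)) powr (1 / \<kappa>)"
proof -
  define m where "m = l * p + (1 - l) * s"
  define X where "X = max 1 (\<phi> m) / min 1 (\<phi> p)"
  have mu: "0 < min 1 (\<phi> p)" "min 1 (\<phi> p) \<le> 1" using pp by auto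
  have X1: "1 \<le> X" unfolding X_def using mu by (simp add: field_simps)
  show ?thesis
  proof (cases "\<phi> s \<le> 1")
    case True
    have "1 \<le> X powr (1 / \<kappa>)" using X1 k by (intro ge_one_powr_ge_zero) auto
    then show ?thesis using True unfolding X_def m_def by simp
  next
    case False
    have ineq: "\<phi> p powr l * \<phi> s powr (1 - l) \<le> \<phi> m" unfolding m_def using lc_ineq[OF lc p s l] .
    have pl: "min 1 (\<phi> p) \<le> \<phi> p powr l"
    proof (cases "1 \<le> \<phi> p")
      case True then have "1 \<le> \<phi> p powr l" using l by (intro ge_one_powr_ge_zero) auto
      then show ?thesis by simp
    next
      case False then have "\<phi> p \<le> \<phi> p powr l" using pp l
        by (metis less_eq_real_def not_le powr_mono' powr_one)
      then show ?thesis by simp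
    qed
    have "min 1 (\<phi> p) * \<phi> s powr (1 - l) \<le> \<phi> p powr l * \<phi> s powr (1 - l)"
      by (intro mult_right_mono pl) auto
    also have "\<dots> \<le> max 1 (\<phi> m)" using ineq by auto
    finally have "\<phi> s powr (1 - l) \<le> X" unfolding X_def using mu by (simp add: field_simps)
    then have "(\<phi> s powr (1 - l)) powr (1 / (1 - l)) \<le> X powr (1 / (1 - l))"
      using l by (intro powr_mono2) auto
    also have "\<dots> \<le> X powr (1 / \<kappa>)" using X1 k l by (intro powr_mono) (auto simp: field_simps)
    finally show ?thesis using l False unfolding X_def m_def by (simp add: powr_powr)
  qed
qed

lemma lc_bounded:
  assumes lc: "log_concave_on {lo<..<hi} \<phi>"
  shows "\<exists>K. \<forall>s\<in>{lo<..<hi}. \<phi> s \<le> K"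
proof (cases "\<forall>s\<in>{lo<..<hi}. \<phi> s \<le> 0")
  case True then show ?thesis by blast
next
  case False
  then obtain u where u: "u \<in> {lo<..<hi}" "0 < \<phi> u" by force
  show ?thesis
  proof (cases "\<forall>s\<in>{lo<..<hi}. \<phi> s \<le> \<phi> u")
    case True then show ?thesis by blast
  next
    case False
    then obtain v where v: "v \<in> {lo<..<hi}" "\<phi> u < \<phi> v" by force
    define p where "p = min u v"
    define q where "q = max u v"
    define r where "r = (p + q) / 2"
    have uv: "u \<noteq> v" using v by auto
    have pq: "p < q" "p \<in> {lo<..<hi}" "q \<in> {lo<..<hi}" "0 < \<phi> p" "0 < \<phi> q"
      using u v uv unfolding p_def q_def by (auto simp: min_def max_def)
    have r: "p < r" "r < q" "r \<in> {lo<..<hi}" using pq unfolding r_def by auto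
    have "min (\<phi> p) (\<phi> q) \<le> \<phi> r" using lc_between[OF lc pq(2,3)] r by auto
    then have rpos: "0 < \<phi> r" using pq by auto
    define \<kappa>1 where "\<kappa>1 = (r - p) / (hi - lo)"
    define \<kappa>2 where "\<kappa>2 = (q - r) / (hi - lo)"
    define K1 where "K1 = (max 1 (\<phi> r) / min 1 (\<phi> p)) powr (1 / \<kappa>1)"
    define K2 where "K2 = (max 1 (\<phi> r) / min 1 (\<phi> q)) powr (1 / \<kappa>2)"
    have hl: "lo < hi" using u by auto
    have k1: "0 < \<kappa>1" "0 < \<kappa>2" using r hl unfolding \<kappa>1_def \<kappa>2_def by auto
    have "\<forall>s\<in>{lo<..<hi}. \<phi> s \<le> max (\<phi> r) (max K1 K2)"
    proof
      fix s assume s: "s \<in> {lo<..<hi}"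
      consider "s = r" | "r < s" | "s < r" by linarith
      then show "\<phi> s \<le> max (\<phi> r) (max K1 K2)"
      proof cases
        case 1 then show ?thesis by simp
      next
        case 2
        define l where "l = (s - r) / (s - p)"
        have l: "0 < l" "l < 1" using 2 r unfolding l_def by (auto simp: field_simps)
        have e1: "l * (s - p) = s - r" using 2 r unfolding l_def by auto
        have "l * p + (1 - l) * s = s - l * (s - p)" by algebra
        then have m: "l * p + (1 - l) * s = r" using e1 by simp
        have "1 - l = (r - p) / (s - p)" using 2 r unfolding l_def by (auto simp: field_simps)
        moreover have "(r - p) / (hi - lo) \<le> (r - p) / (s - p)"
          using 2 r s pq by (intro divide_left_mono) auto
        ultimately have "\<kappa>1 \<le> 1 - l" unfolding \<kappa>1_def by simp
        then have "\<phi> s \<le> K1" using lc_side[OF lc pq(2) s l pq(4) k1(1)] m unfolding K1_def by simp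
        then show ?thesis by simp
      next
        case 3
        define l where "l = (r - s) / (q - s)"
        have l: "0 < l" "l < 1" using 3 r unfolding l_def by (auto simp: field_simps)
        have e1: "l * (q - s) = r - s" using 3 r unfolding l_def by auto
        have "l * q + (1 - l) * s = s + l * (q - s)" by algebra
        then have m: "l * q + (1 - l) * s = r" using e1 by simp
        have "1 - l = (q - r) / (q - s)" using 3 r unfolding l_def by (auto simp: field_simps)
        moreover have "(q - r) / (hi - lo) \<le> (q - r) / (q - s)"
          using 3 r s pq by (intro divide_left_mono) auto
        ultimately have "\<kappa>2 \<le> 1 - l" unfolding \<kappa>2_def by simp
        then have "\<phi> s \<le> K2" using lc_side[OF lc pq(3) s l pq(5) k1(2)] m unfolding K2_def by simp
        then show ?thesis by simp
      qed
    qed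
    then show ?thesis by blast
  qed
qed


lemma level_meas:
  fixes f :: "real \<Rightarrow> real"
  assumes fm[measurable]: "f \<in> borel_measurable lborel"
  shows "(\<lambda>\<tau>. emeasure lborel {x. c * \<tau> < f x}) \<in> borel_measurable lborel"
proof -
  have fb[measurable]: "f \<in> borel_measurable borel" using fm by simp
  have Q0: "{p \<in> space (lborel \<Otimes>\<^sub>M lborel). c * fst p < f (snd p)} \<in> sets (lborel \<Otimes>\<^sub>M lborel)"
    by measurable
  then have Q: "{p :: real \<times> real. c * fst p < f (snd p)} \<in> sets (lborel \<Otimes>\<^sub>M lborel)"
    by (simp add: space_pair_measure)
  have "(\<lambda>\<tau>. emeasure lborel (Pair \<tau> -` {p :: real \<times> real. c * fst p < f (snd p)})) \<in> borel_measurable lborel"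
    by (rule sigma_finite_measure.measurable_emeasure_Pair[OF lborel.sigma_finite_measure_axioms Q])
  moreover have "\<And>\<tau>. Pair \<tau> -` {p :: real \<times> real. c * fst p < f (snd p)} = {x. c * \<tau> < f x}" by auto
  ultimately show ?thesis by simp
qed

lemma layer:
  fixes f :: "real \<Rightarrow> real"
  assumes fm[measurable]: "f \<in> borel_measurable lborel" and nn: "\<And>x. 0 \<le> f x" and c: "0 < c"
  shows "(\<integral>\<^sup>+x. ennreal (f x) \<partial>lborel) =
     ennreal c * (\<integral>\<^sup>+\<tau>. indicator {0<..} \<tau> * emeasure lborel {x. c * \<tau> < f x} \<partial>lborel)"
proof -
  have fb[measurable]: "f \<in> borel_measurable borel" using fm by simp
  define G where "G = {p :: real \<times> real. 0 < snd p \<and> c * snd p < f (fst p)}"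
  have G0: "{p \<in> space (lborel \<Otimes>\<^sub>M lborel). 0 < snd p \<and> c * snd p < f (fst p)} \<in> sets (lborel \<Otimes>\<^sub>M lborel)"
    by measurable
  then have Gm: "G \<in> sets (lborel \<Otimes>\<^sub>M lborel)" unfolding G_def by (simp add: space_pair_measure)
  have inner: "(\<integral>\<^sup>+\<tau>. indicator G (x, \<tau>) \<partial>lborel) = ennreal (f x / c)" for x
  proof -
    have "{\<tau>. (x, \<tau>) \<in> G} = {0<..<f x / c}" unfolding G_def using c by (auto simp: field_simps)
    then have "(\<lambda>\<tau>. indicator G (x, \<tau>) :: ennreal) = indicator {0<..<f x / c}"
      by (auto simp: indicator_def fun_eq_iff)
    then show "(\<integral>\<^sup>+\<tau>. indicator G (x, \<tau>) \<partial>lborel) = ennreal (f x / c)"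
      using nn[of x] c by (simp add: emeasure_lborel_Ioo)
  qed
  have pt: "ennreal (f x) = ennreal c * (\<integral>\<^sup>+\<tau>. indicator G (x, \<tau>) \<partial>lborel)" for x
    using c nn[of x] by (simp add: inner ennreal_mult[symmetric])
  have innerm: "(\<lambda>x. \<integral>\<^sup>+\<tau>. indicator G (x, \<tau>) \<partial>lborel) \<in> borel_measurable lborel"
    unfolding inner by measurable
  have "(\<integral>\<^sup>+x. ennreal (f x) \<partial>lborel) = (\<integral>\<^sup>+x. ennreal c * (\<integral>\<^sup>+\<tau>. indicator G (x, \<tau>) \<partial>lborel) \<partial>lborel)"
    using pt by simp
  also have "\<dots> = ennreal c * (\<integral>\<^sup>+x. (\<integral>\<^sup>+\<tau>. indicator G (x, \<tau>) \<partial>lborel) \<partial>lborel)"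
    using innerm by (intro nn_integral_cmult)
  also have "(\<integral>\<^sup>+x. (\<integral>\<^sup>+\<tau>. indicator G (x, \<tau>) \<partial>lborel) \<partial>lborel)
      = (\<integral>\<^sup>+\<tau>. (\<integral>\<^sup>+x. indicator G (x, \<tau>) \<partial>lborel) \<partial>lborel)"
  proof (intro lborel_pair.Fubini'[symmetric])
    have "(\<lambda>(x, \<tau>). indicator G (x, \<tau>) :: ennreal) = indicator G" by (simp add: case_prod_eta)
    then show "(\<lambda>(x, \<tau>). indicator G (x, \<tau>) :: ennreal) \<in> borel_measurable (lborel \<Otimes>\<^sub>M lborel)"
      using Gm by simp
  qed
  also have "\<dots> = (\<integral>\<^sup>+\<tau>. indicator {0<..} \<tau> * emeasure lborel {x. c * \<tau> < f x} \<partial>lborel)"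
  proof (intro nn_integral_cong)
    fix \<tau> :: real
    have "(\<lambda>x. indicator G (x, \<tau>) :: ennreal) = (\<lambda>x. indicator {0<..} \<tau> * indicator {x. c * \<tau> < f x} x)"
      unfolding G_def by (auto simp: indicator_def fun_eq_iff)
    moreover have "{x. c * \<tau> < f x} \<in> sets lborel" by measurable
    ultimately show "(\<integral>\<^sup>+x. indicator G (x, \<tau>) \<partial>lborel) = indicator {0<..} \<tau> * emeasure lborel {x. c * \<tau> < f x}"
      by (simp add: nn_integral_cmult)
  qed
  finally show ?thesis .
qed


lemma sum_point:
  fixes I J :: "real set"
  assumes I: "is_interval I" "I \<noteq> {}" "bdd_below I" "bdd_above I"
    and J: "is_interval J" "J \<noteq> {}" "bdd_below J" "bdd_above J"
    and z: "Inf I + Inf J < 2 * z" "2 * z < Sup I + Sup J"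
  shows "\<exists>p\<in>I. \<exists>q\<in>J. p + q = 2 * z"
proof -
  define e where "e = 2 * z - (Inf I + Inf J)"
  define e' where "e' = Sup I + Sup J - 2 * z"
  have e: "0 < e" "0 < e'" using z unfolding e_def e'_def by auto
  obtain p0 where p0: "p0 \<in> I" "p0 < Inf I + e / 2"
    using cInf_less_iff[OF I(2,3), of "Inf I + e / 2"] e by auto
  obtain q0 where q0: "q0 \<in> J" "q0 < Inf J + e / 2"
    using cInf_less_iff[OF J(2,3), of "Inf J + e / 2"] e by auto
  obtain p1 where p1: "p1 \<in> I" "Sup I - e' / 2 < p1"
    using less_cSup_iff[OF I(2,4), of "Sup I - e' / 2"] e by auto
  obtain q1 where q1: "q1 \<in> J" "Sup J - e' / 2 < q1"
    using less_cSup_iff[OF J(2,4), of "Sup J - e' / 2"] e by auto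
  define s0 where "s0 = p0 + q0"
  define s1 where "s1 = p1 + q1"
  have s1: "s0 < 2 * z" using p0 q0 unfolding s0_def e_def by argo
  have s2: "2 * z < s1" using p1 q1 unfolding s1_def e'_def by argo
  note s = s1 s2
  define t where "t = (2 * z - s0) / (s1 - s0)"
  have t: "0 \<le> t" "t \<le> 1" using s unfolding t_def by (simp_all add: divide_le_eq_1)
  have ts: "t * (s1 - s0) = 2 * z - s0" using s unfolding t_def by auto
  define p where "p = (1 - t) * p0 + t * p1"
  define q where "q = (1 - t) * q0 + t * q1"
  have cI: "convex I" "convex J" using I(1) J(1) by (simp_all add: is_interval_convex_1)
  have "p \<in> I" unfolding p_def using convexD[OF cI(1) p0(1) p1(1), of "1 - t" t] t by simp
  moreover have "q \<in> J" unfolding q_def using convexD[OF cI(2) q0(1) q1(1), of "1 - t" t] t by simp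
  moreover have "p + q = s0 + t * (s1 - s0)" unfolding p_def q_def s0_def s1_def by algebra
  ultimately show ?thesis using ts by auto
qed

lemma level_sum:
  fixes I J K :: "real set"
  assumes I: "is_interval I" "I \<noteq> {}" "I \<subseteq> {lo..hi}"
    and J: "is_interval J" "J \<noteq> {}" "J \<subseteq> {lo..hi}"
    and K: "\<And>p q. p \<in> I \<Longrightarrow> q \<in> J \<Longrightarrow> (p + q) / 2 \<in> K"
    and Km: "K \<in> sets lborel"
  shows "emeasure lborel I + emeasure lborel J \<le> 2 * emeasure lborel K"
proof -
  have Ib: "bdd_below I" "bdd_above I"
    by (rule bdd_belowI[of _ lo], use I(3) in auto) (rule bdd_aboveI[of _ hi], use I(3) in auto)
  have Jb: "bdd_below J" "bdd_above J"
    by (rule bdd_belowI[of _ lo], use J(3) in auto) (rule bdd_aboveI[of _ hi], use J(3) in auto)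
  have Isub: "I \<subseteq> {Inf I..Sup I}"
  proof
    fix x assume "x \<in> I" then show "x \<in> {Inf I..Sup I}" using cInf_lower[OF _ Ib(1)] cSup_upper[OF _ Ib(2)] by simp
  qed
  have Jsub: "J \<subseteq> {Inf J..Sup J}"
  proof
    fix x assume "x \<in> J" then show "x \<in> {Inf J..Sup J}" using cInf_lower[OF _ Jb(1)] cSup_upper[OF _ Jb(2)] by simp
  qed
  obtain xi where xi: "xi \<in> I" using I(2) by blast
  obtain xj where xj: "xj \<in> J" using J(2) by blast
  have Ile: "Inf I \<le> Sup I" using Isub xi by (meson atLeastAtMost_iff order_trans subsetD)
  have Jle: "Inf J \<le> Sup J" using Jsub xj by (meson atLeastAtMost_iff order_trans subsetD)
  have "emeasure lborel I \<le> emeasure lborel {Inf I..Sup I}" by (rule emeasure_mono[OF Isub]) auto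
  also have "\<dots> = ennreal (Sup I - Inf I)" using Ile by simp
  finally have mI: "emeasure lborel I \<le> ennreal (Sup I - Inf I)" .
  have "emeasure lborel J \<le> emeasure lborel {Inf J..Sup J}" by (rule emeasure_mono[OF Jsub]) auto
  also have "\<dots> = ennreal (Sup J - Inf J)" using Jle by simp
  finally have mJ: "emeasure lborel J \<le> ennreal (Sup J - Inf J)" .
  have sub: "{(Inf I + Inf J) / 2 <..< (Sup I + Sup J) / 2} \<subseteq> K"
  proof
    fix z assume "z \<in> {(Inf I + Inf J) / 2 <..< (Sup I + Sup J) / 2}"
    then have z1: "(Inf I + Inf J) / 2 < z" "z < (Sup I + Sup J) / 2" by simp_all
    then have "Inf I + Inf J < 2 * z" "2 * z < Sup I + Sup J" by argo+
    then obtain p q where "p \<in> I" "q \<in> J" "p + q = 2 * z" using sum_point[OF I(1,2) Ib J(1,2) Jb] by blast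
    then show "z \<in> K" using K[of p q] by auto
  qed
  have "emeasure lborel I + emeasure lborel J \<le> ennreal (Sup I - Inf I) + ennreal (Sup J - Inf J)"
    using mI mJ by (rule add_mono)
  also have "\<dots> = ennreal ((Sup I - Inf I) + (Sup J - Inf J))"
    using Ile Jle by (intro ennreal_plus[symmetric]) auto
  also have "\<dots> = ennreal ((Sup I + Sup J) - (Inf I + Inf J))"
    by (rule arg_cong[where f=ennreal]) argo
  also have "\<dots> = ennreal (2 * ((Sup I + Sup J) / 2 - (Inf I + Inf J) / 2))"
    by (rule arg_cong[where f=ennreal]) argo
  also have "\<dots> = 2 * ennreal ((Sup I + Sup J) / 2 - (Inf I + Inf J) / 2)"
    by (subst ennreal_mult') auto
  also have "\<dots> = 2 * emeasure lborel {(Inf I + Inf J) / 2 <..< (Sup I + Sup J) / 2}"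
  proof -
    have "(Inf I + Inf J) / 2 \<le> (Sup I + Sup J) / 2" using Ile Jle by argo
    then show ?thesis by (subst emeasure_lborel_Ioo) auto
  qed
  also have "\<dots> \<le> 2 * emeasure lborel K"
  proof -
    have "emeasure lborel {(Inf I + Inf J) / 2 <..< (Sup I + Sup J) / 2} \<le> emeasure lborel K"
      using sub Km by (rule emeasure_mono)
    then show ?thesis by (rule mult_left_mono) auto
  qed
  finally show ?thesis .
qed


lemma ennreal_finite_obtain:
  fixes X :: ennreal
  assumes "ennreal a * X = ennreal F" "0 < a" "0 \<le> F"
  obtains x where "X = ennreal x" "0 \<le> x" "F = a * x"
proof -
  have "X \<noteq> top" using assms by (auto simp: ennreal_mult_top)
  then obtain x where x: "X = ennreal x" "0 \<le> x" by (cases X) auto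
  then have "ennreal (a * x) = ennreal F" using assms by (simp add: ennreal_mult)
  moreover have "0 \<le> a * x" using assms x by simp
  ultimately have "F = a * x" using assms(3) ennreal_inj by metis
  then show ?thesis using that x by blast
qed

lemma PL:
  fixes f g h :: "real \<Rightarrow> real"
  assumes fm[measurable]: "f \<in> borel_measurable lborel" and gm[measurable]: "g \<in> borel_measurable lborel"
    and hm[measurable]: "h \<in> borel_measurable lborel"
    and fnn: "\<And>x. 0 \<le> f x" and gnn: "\<And>x. 0 \<le> g x" and hnn: "\<And>x. 0 \<le> h x"
    and fi: "integrable lborel f" and gi: "integrable lborel g" and hi: "integrable lborel h"
    and fb: "\<And>x. f x \<le> Bf" and gb: "\<And>x. g x \<le> Bg"
    and fs: "\<And>x. 0 < f x \<Longrightarrow> x \<in> {lo..hi}" and gs: "\<And>x. 0 < g x \<Longrightarrow> x \<in> {lo..hi}"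
    and fiv: "\<And>t. 0 < t \<Longrightarrow> is_interval {x. t < f x}"
    and giv: "\<And>t. 0 < t \<Longrightarrow> is_interval {x. t < g x}"
    and mid: "\<And>p q. f p * g q \<le> (h ((p + q) / 2))\<^sup>2"
  shows "integral\<^sup>L lborel f * integral\<^sup>L lborel g \<le> (integral\<^sup>L lborel h)\<^sup>2"
proof -
  have fbm[measurable]: "f \<in> borel_measurable borel" using fm by simp
  have gbm[measurable]: "g \<in> borel_measurable borel" using gm by simp
  have hbm[measurable]: "h \<in> borel_measurable borel" using hm by simp
  define a where "a = Sup (range f)"
  define b where "b = Sup (range g)"
  have bdf: "bdd_above (range f)" using fb by (intro bdd_aboveI[of _ Bf]) auto
  have bdg: "bdd_above (range g)" using gb by (intro bdd_aboveI[of _ Bg]) auto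
  have fa: "f x \<le> a" for x unfolding a_def using bdf by (intro cSup_upper) auto
  have gb': "g x \<le> b" for x unfolding b_def using bdg by (intro cSup_upper) auto
  have a0: "0 \<le> a" using fa[of 0] fnn[of 0] by linarith
  have b0: "0 \<le> b" using gb'[of 0] gnn[of 0] by linarith
  show ?thesis
  proof (cases "a = 0 \<or> b = 0")
    case True
    then have "integral\<^sup>L lborel f = 0 \<or> integral\<^sup>L lborel g = 0"
    proof
      assume "a = 0"
      then have "f = (\<lambda>x. 0)" using fa fnn by (intro ext) (metis order_antisym)
      then show ?thesis by simp
    next
      assume "b = 0"
      then have "g = (\<lambda>x. 0)" using gb' gnn by (intro ext) (metis order_antisym)
      then show ?thesis by simp
    qed
    then show ?thesis by auto
  next
    case False
    then have apos: "0 < a" and bpos: "0 < b" using a0 b0 by auto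
    define c where "c = sqrt (a * b)"
    have cpos: "0 < c" unfolding c_def using apos bpos by simp
    have c2: "c\<^sup>2 = a * b" unfolding c_def using apos bpos by simp
    have key: "emeasure lborel {x. a * \<tau> < f x} + emeasure lborel {x. b * \<tau> < g x}
        \<le> 2 * emeasure lborel {x. c * \<tau> < h x}" if \<tau>: "0 < \<tau>" "\<tau> < 1" for \<tau>
    proof (rule level_sum)
      show "is_interval {x. a * \<tau> < f x}" using fiv apos \<tau> by simp
      show "is_interval {x. b * \<tau> < g x}" using giv bpos \<tau> by simp
      have "a * \<tau> < a" using apos \<tau> by simp
      then obtain x0 where "a * \<tau> < f x0" using less_cSup_iff[OF _ bdf] unfolding a_def by auto
      then show "{x. a * \<tau> < f x} \<noteq> {}" by auto
      have "b * \<tau> < b" using bpos \<tau> by simp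
      then obtain y0 where "b * \<tau> < g y0" using less_cSup_iff[OF _ bdg] unfolding b_def by auto
      then show "{x. b * \<tau> < g x} \<noteq> {}" by auto
      show "{x. a * \<tau> < f x} \<subseteq> {lo..hi}"
      proof
        fix x assume "x \<in> {x. a * \<tau> < f x}"
        moreover have "0 < a * \<tau>" using apos \<tau> by simp
        ultimately have "0 < f x" by simp
        then show "x \<in> {lo..hi}" by (rule fs)
      qed
      show "{x. b * \<tau> < g x} \<subseteq> {lo..hi}"
      proof
        fix x assume "x \<in> {x. b * \<tau> < g x}"
        moreover have "0 < b * \<tau>" using bpos \<tau> by simp
        ultimately have "0 < g x" by simp
        then show "x \<in> {lo..hi}" by (rule gs)
      qed
      show "{x. c * \<tau> < h x} \<in> sets lborel" by measurable
      fix p q assume p: "p \<in> {x. a * \<tau> < f x}" and q: "q \<in> {x. b * \<tau> < g x}"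
      have ap: "0 < a * \<tau>" "0 < b * \<tau>" using apos bpos \<tau> by simp_all
      have fp: "a * \<tau> < f p" "b * \<tau> < g q" using p q by simp_all
      have "(a * \<tau>) * (b * \<tau>) < f p * g q"
        using fp ap by (intro mult_strict_mono) linarith+
      also have "\<dots> \<le> (h ((p + q) / 2))\<^sup>2" by (rule mid)
      moreover have "(c * \<tau>)\<^sup>2 = (a * \<tau>) * (b * \<tau>)"
      proof -
        have "(c * \<tau>)\<^sup>2 = c\<^sup>2 * \<tau>\<^sup>2" by (rule power_mult_distrib)
        also have "\<dots> = (a * b) * \<tau>\<^sup>2" by (simp only: c2)
        finally show ?thesis by (simp add: power2_eq_square)
      qed
      ultimately have lt: "(c * \<tau>)\<^sup>2 < (h ((p + q) / 2))\<^sup>2" by simp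
      have "c * \<tau> < h ((p + q) / 2)"
      proof (rule ccontr)
        assume "\<not> c * \<tau> < h ((p + q) / 2)"
        then have "h ((p + q) / 2) \<le> c * \<tau>" by simp
        then have "(h ((p + q) / 2))\<^sup>2 \<le> (c * \<tau>)\<^sup>2" using hnn by (intro power_mono) auto
        then show False using lt by simp
      qed
      then show "(p + q) / 2 \<in> {x. c * \<tau> < h x}" by simp
    qed
    have empty: "{x. u * \<tau> < k x} = {}" if "\<And>x. k x \<le> u" "0 < u" "1 \<le> \<tau>" for u \<tau> and k :: "real \<Rightarrow> real"
    proof -
      have "u \<le> u * \<tau>" using that by simp
      then have "\<not> (u * \<tau> < k x)" for x using that(1)[of x] by linarith
      then show ?thesis by auto
    qed
    define X where "X = (\<integral>\<^sup>+\<tau>. indicator {0<..<1} \<tau> * emeasure lborel {x. a * \<tau> < f x} \<partial>lborel)"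
    define Y where "Y = (\<integral>\<^sup>+\<tau>. indicator {0<..<1} \<tau> * emeasure lborel {x. b * \<tau> < g x} \<partial>lborel)"
    define Z where "Z = (\<integral>\<^sup>+\<tau>. indicator {0<..<1} \<tau> * emeasure lborel {x. c * \<tau> < h x} \<partial>lborel)"
    have [measurable]: "(\<lambda>\<tau>. emeasure lborel {x. a * \<tau> < f x}) \<in> borel_measurable lborel"
      by (rule level_meas[OF fm])
    have [measurable]: "(\<lambda>\<tau>. emeasure lborel {x. b * \<tau> < g x}) \<in> borel_measurable lborel"
      by (rule level_meas[OF gm])
    have [measurable]: "(\<lambda>\<tau>. emeasure lborel {x. c * \<tau> < h x}) \<in> borel_measurable lborel"
      by (rule level_meas[OF hm])
    have LF: "(\<integral>\<^sup>+x. ennreal (f x) \<partial>lborel) = ennreal a * X"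
    proof -
      have "(\<integral>\<^sup>+x. ennreal (f x) \<partial>lborel) = ennreal a * (\<integral>\<^sup>+\<tau>. indicator {0<..} \<tau> * emeasure lborel {x. a * \<tau> < f x} \<partial>lborel)"
        by (rule layer[OF fm fnn apos])
      also have "(\<integral>\<^sup>+\<tau>. indicator {0<..} \<tau> * emeasure lborel {x. a * \<tau> < f x} \<partial>lborel) = X"
        unfolding X_def
      proof (intro nn_integral_cong)
        fix \<tau> :: real
        show "indicator {0<..} \<tau> * emeasure lborel {x. a * \<tau> < f x} = indicator {0<..<1} \<tau> * emeasure lborel {x. a * \<tau> < f x}"
        proof (cases "1 \<le> \<tau>")
          case True then show ?thesis using empty[of f a \<tau>] fa apos by simp
        qed (auto simp: indicator_def)
      qed
      finally show ?thesis .
    qed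
    have LG: "(\<integral>\<^sup>+x. ennreal (g x) \<partial>lborel) = ennreal b * Y"
    proof -
      have "(\<integral>\<^sup>+x. ennreal (g x) \<partial>lborel) = ennreal b * (\<integral>\<^sup>+\<tau>. indicator {0<..} \<tau> * emeasure lborel {x. b * \<tau> < g x} \<partial>lborel)"
        by (rule layer[OF gm gnn bpos])
      also have "(\<integral>\<^sup>+\<tau>. indicator {0<..} \<tau> * emeasure lborel {x. b * \<tau> < g x} \<partial>lborel) = Y"
        unfolding Y_def
      proof (intro nn_integral_cong)
        fix \<tau> :: real
        show "indicator {0<..} \<tau> * emeasure lborel {x. b * \<tau> < g x} = indicator {0<..<1} \<tau> * emeasure lborel {x. b * \<tau> < g x}"
        proof (cases "1 \<le> \<tau>")
          case True then show ?thesis using empty[of g b \<tau>] gb' bpos by simp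
        qed (auto simp: indicator_def)
      qed
      finally show ?thesis .
    qed
    have LH: "ennreal c * Z \<le> (\<integral>\<^sup>+x. ennreal (h x) \<partial>lborel)"
    proof -
      have "Z \<le> (\<integral>\<^sup>+\<tau>. indicator {0<..} \<tau> * emeasure lborel {x. c * \<tau> < h x} \<partial>lborel)"
        unfolding Z_def by (intro nn_integral_mono mult_right_mono) (auto simp: indicator_def)
      then have "ennreal c * Z \<le> ennreal c * (\<integral>\<^sup>+\<tau>. indicator {0<..} \<tau> * emeasure lborel {x. c * \<tau> < h x} \<partial>lborel)"
        by (rule mult_left_mono) auto
      also have "\<dots> = (\<integral>\<^sup>+x. ennreal (h x) \<partial>lborel)" by (rule layer[OF hm hnn cpos, symmetric])
      finally show ?thesis .
    qed
    have XYZ: "X + Y \<le> 2 * Z"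
    proof -
      have "X + Y = (\<integral>\<^sup>+\<tau>. indicator {0<..<1} \<tau> * emeasure lborel {x. a * \<tau> < f x}
           + indicator {0<..<1} \<tau> * emeasure lborel {x. b * \<tau> < g x} \<partial>lborel)"
        unfolding X_def Y_def by (rule nn_integral_add[symmetric]) measurable
      also have "\<dots> \<le> (\<integral>\<^sup>+\<tau>. 2 * (indicator {0<..<1} \<tau> * emeasure lborel {x. c * \<tau> < h x}) \<partial>lborel)"
      proof (intro nn_integral_mono)
        fix \<tau> :: real
        show "indicator {0<..<1} \<tau> * emeasure lborel {x. a * \<tau> < f x} + indicator {0<..<1} \<tau> * emeasure lborel {x. b * \<tau> < g x}
            \<le> 2 * (indicator {0<..<1} \<tau> * emeasure lborel {x. c * \<tau> < h x})"
        proof (cases "\<tau> \<in> {0<..<1}")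
          case True then show ?thesis using key[of \<tau>] by simp
        qed simp
      qed
      also have "\<dots> = 2 * Z" unfolding Z_def by (rule nn_integral_cmult) measurable
      finally show ?thesis .
    qed
    define F where "F = integral\<^sup>L lborel f"
    define G where "G = integral\<^sup>L lborel g"
    define H where "H = integral\<^sup>L lborel h"
    have eF: "(\<integral>\<^sup>+x. ennreal (f x) \<partial>lborel) = ennreal F" unfolding F_def
      using fi fnn by (intro nn_integral_eq_integral) auto
    have eG: "(\<integral>\<^sup>+x. ennreal (g x) \<partial>lborel) = ennreal G" unfolding G_def
      using gi gnn by (intro nn_integral_eq_integral) auto
    have eH: "(\<integral>\<^sup>+x. ennreal (h x) \<partial>lborel) = ennreal H" unfolding H_def
      using hi hnn by (intro nn_integral_eq_integral) auto
    have F0: "0 \<le> F" unfolding F_def using fnn by (intro integral_nonneg_AE) auto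
    have G0: "0 \<le> G" unfolding G_def using gnn by (intro integral_nonneg_AE) auto
    have H0: "0 \<le> H" unfolding H_def using hnn by (intro integral_nonneg_AE) auto
    have aX: "ennreal a * X = ennreal F" using LF eF by simp
    have bY: "ennreal b * Y = ennreal G" using LG eG by simp
    obtain x where x: "X = ennreal x" "0 \<le> x" "F = a * x" using ennreal_finite_obtain[OF aX apos F0] by blast
    obtain y where y: "Y = ennreal y" "0 \<le> y" "G = b * y" using ennreal_finite_obtain[OF bY bpos G0] by blast
    have "Z \<noteq> top" using LH eH cpos by (auto simp: ennreal_mult_top top_unique)
    then obtain z where z: "Z = ennreal z" "0 \<le> z" by (cases Z) auto
    have "ennreal (c * z) \<le> ennreal H" using LH eH z cpos by (simp add: ennreal_mult)
    then have Hz: "c * z \<le> H" using H0 by (simp add: ennreal_le_iff)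
    have e1: "X + Y = ennreal (x + y)" using x y by (simp add: ennreal_plus)
    have e2: "2 * Z = ennreal (2 * z)" using z by (simp add: ennreal_mult)
    have "ennreal (x + y) \<le> ennreal (2 * z)" using XYZ unfolding e1 e2 .
    then have xyz: "x + y \<le> 2 * z" using z by (simp add: ennreal_le_iff)
    have "c * (x + y) \<le> c * (2 * z)" using xyz cpos by (intro mult_left_mono) auto
    then have "c * (x + y) / 2 \<le> H" using Hz by simp
    then have "(c * (x + y) / 2)\<^sup>2 \<le> H\<^sup>2" using cpos x y by (intro power_mono) auto
    moreover have "F * G \<le> (c * (x + y) / 2)\<^sup>2"
    proof -
      have e: "(x + y)\<^sup>2 - 4 * (x * y) = (x - y)\<^sup>2" by (simp add: power2_eq_square algebra_simps)
      have "4 * (x * y) \<le> (x + y)\<^sup>2" using e zero_le_power2[of "x - y"] by linarith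
      then have "c\<^sup>2 * (4 * (x * y)) \<le> c\<^sup>2 * (x + y)\<^sup>2" by (intro mult_left_mono) auto
      moreover have "(c * (x + y) / 2)\<^sup>2 = c\<^sup>2 * (x + y)\<^sup>2 / 4" by (simp add: power_mult_distrib power_divide)
      moreover have "F * G = c\<^sup>2 * (x * y)" using x y c2 by (simp add: mult_ac)
      ultimately show ?thesis by simp
    qed
    ultimately show ?thesis unfolding F_def[symmetric] G_def[symmetric] H_def[symmetric] by linarith
  qed
qed


lemma taylor_bound:
  fixes h h1 h2 :: "real \<Rightarrow> real"
  assumes xy: "x \<in> {a<..<b}" "y \<in> {a<..<b}"
    and d1: "\<And>z. z \<in> {a<..<b} \<Longrightarrow> (h has_real_derivative h1 z) (at z)"
    and d2: "\<And>z. z \<in> {a<..<b} \<Longrightarrow> (h1 has_real_derivative h2 z) (at z)"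
    and bd: "\<And>z. z \<in> {a<..<b} \<Longrightarrow> \<bar>h2 z\<bar> \<le> K"
  shows "\<bar>h y - h x - (y - x) * h1 x\<bar> \<le> K * (y - x)\<^sup>2"
proof -
  define S where "S = closed_segment x y"
  have cS: "convex S" unfolding S_def by simp
  have SJ: "S \<subseteq> {a<..<b}" unfolding S_def using xy by (intro closed_segment_subset) auto
  have xS: "x \<in> S" and yS: "y \<in> S" unfolding S_def by auto
  have lip: "\<bar>h1 z - h1 x\<bar> \<le> K * \<bar>z - x\<bar>" if z: "z \<in> S" for z
  proof -
    have "norm (h1 z - h1 x) \<le> K * norm (z - x)"
    proof (rule field_differentiable_bound[OF cS _ _ z xS])
      fix w assume "w \<in> S"
      then have w: "w \<in> {a<..<b}" using SJ by blast
      show "(h1 has_field_derivative h2 w) (at w within S)"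
        using d2[OF w] by (rule has_field_derivative_at_within)
    next
      fix w assume "w \<in> S"
      then have w: "w \<in> {a<..<b}" using SJ by blast
      show "norm (h2 w) \<le> K" using bd[OF w] by simp
    qed
    then show ?thesis by simp
  qed
  have K0: "0 \<le> K" using bd[OF xy(1)] by linarith
  define \<phi> where "\<phi> z = h z - z * h1 x" for z
  have "norm (\<phi> y - \<phi> x) \<le> (K * \<bar>y - x\<bar>) * norm (y - x)"
  proof (rule field_differentiable_bound[OF cS _ _ yS xS])
    fix w assume w: "w \<in> S"
    then have w': "w \<in> {a<..<b}" using SJ by blast
    have "((\<lambda>z. h z - z * h1 x) has_field_derivative (h1 w - 1 * h1 x)) (at w)"
      by (intro DERIV_diff d1[OF w'] DERIV_cmult_right DERIV_ident)
    then have "(\<phi> has_field_derivative (h1 w - h1 x)) (at w)"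
      unfolding \<phi>_def by simp
    then show "(\<phi> has_field_derivative (h1 w - h1 x)) (at w within S)"
      by (rule has_field_derivative_at_within)
  next
    fix w assume w: "w \<in> S"
    have "\<bar>w - x\<bar> \<le> \<bar>y - x\<bar>" using segment_bound1[of w x y] w unfolding S_def by simp
    then have "K * \<bar>w - x\<bar> \<le> K * \<bar>y - x\<bar>" using K0 by (intro mult_left_mono) auto
    then show "norm (h1 w - h1 x) \<le> K * \<bar>y - x\<bar>" using lip[OF w] by simp
  qed
  moreover have "\<phi> y - \<phi> x = h y - h x - (y - x) * h1 x" unfolding \<phi>_def by (simp add: algebra_simps)
  ultimately show ?thesis by (simp add: power2_eq_square abs_mult_self)
qed

lemma deriv_int:
  fixes Hz Ha Hb :: "real \<Rightarrow> real \<Rightarrow> real" and B :: "real \<Rightarrow> real"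
  assumes x: "x \<in> {a<..<b}"
    and int0: "\<And>y. y \<in> {a<..<b} \<Longrightarrow> integrable lborel (\<lambda>s. Hz s y)"
    and int1: "integrable lborel (\<lambda>s. Ha s x)"
    and intB: "integrable lborel B"
    and d1: "\<And>s y. y \<in> {a<..<b} \<Longrightarrow> ((\<lambda>y. Hz s y) has_real_derivative Ha s y) (at y)"
    and d2: "\<And>s y. y \<in> {a<..<b} \<Longrightarrow> ((\<lambda>y. Ha s y) has_real_derivative Hb s y) (at y)"
    and bd: "\<And>s y. y \<in> {a<..<b} \<Longrightarrow> \<bar>Hb s y\<bar> \<le> B s"
  shows "((\<lambda>y. \<integral>s. Hz s y \<partial>lborel) has_real_derivative (\<integral>s. Ha s x \<partial>lborel)) (at x)"
proof -
  define F where "F y = (\<integral>s. Hz s y \<partial>lborel)" for y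
  define D where "D = (\<integral>s. Ha s x \<partial>lborel)"
  define C where "C = (\<integral>s. B s \<partial>lborel)"
  have err: "\<bar>F y - F x - (y - x) * D\<bar> \<le> C * (y - x)\<^sup>2" if y: "y \<in> {a<..<b}" for y
  proof -
    have pt: "\<bar>Hz s y - Hz s x - (y - x) * Ha s x\<bar> \<le> B s * (y - x)\<^sup>2" for s
      by (rule taylor_bound[OF x y d1 d2 bd])
    have ie: "integrable lborel (\<lambda>s. Hz s y - Hz s x - (y - x) * Ha s x)"
      using int0[OF y] int0[OF x] int1 by auto
    have "F y - F x - (y - x) * D = (\<integral>s. Hz s y - Hz s x - (y - x) * Ha s x \<partial>lborel)"
      unfolding F_def D_def using int0[OF y] int0[OF x] int1 by simp
    also have "\<bar>\<dots>\<bar> \<le> (\<integral>s. \<bar>Hz s y - Hz s x - (y - x) * Ha s x\<bar> \<partial>lborel)"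
      by (rule integral_abs_bound)
    also have "\<dots> \<le> (\<integral>s. B s * (y - x)\<^sup>2 \<partial>lborel)"
      using ie intB pt by (intro integral_mono) auto
    also have "\<dots> = C * (y - x)\<^sup>2" unfolding C_def by simp
    finally show ?thesis .
  qed
  have "((\<lambda>y. (F y - F x) / (y - x) - D) \<longlongrightarrow> 0) (at x)"
  proof (rule Lim_null_comparison)
    have ev: "\<forall>\<^sub>F y in at x. y \<in> {a<..<b}" using x by (intro eventually_at_in_open') auto
    have ne: "\<forall>\<^sub>F y in at x. y \<noteq> x" by (simp add: eventually_at_filter)
    show "\<forall>\<^sub>F y in at x. norm ((F y - F x) / (y - x) - D) \<le> C * \<bar>y - x\<bar>"
      using ev ne
    proof eventually_elim
      case (elim y)
      have "(F y - F x) / (y - x) - D = (F y - F x - (y - x) * D) / (y - x)"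
        using elim by (simp add: field_simps)
      then have "norm ((F y - F x) / (y - x) - D) = \<bar>F y - F x - (y - x) * D\<bar> / \<bar>y - x\<bar>"
        by simp
      also have "\<dots> \<le> C * (y - x)\<^sup>2 / \<bar>y - x\<bar>"
        using err[OF elim(1)] by (intro divide_right_mono) auto
      also have "\<dots> = C * \<bar>y - x\<bar>\<^sup>2 / \<bar>y - x\<bar>" by simp
      also have "\<dots> = C * \<bar>y - x\<bar>"
      proof -
        have nz: "\<bar>y - x\<bar> \<noteq> 0" using elim by simp
        have "C * \<bar>y - x\<bar>\<^sup>2 / \<bar>y - x\<bar> = C * (\<bar>y - x\<bar>\<^sup>2 / \<bar>y - x\<bar>)" by simp
        also have "\<bar>y - x\<bar>\<^sup>2 / \<bar>y - x\<bar> = \<bar>y - x\<bar>" using nz by (metis abs_mult_self_eq nonzero_mult_div_cancel_right power2_eq_square power2_abs)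
        finally show ?thesis .
      qed
      finally show ?case .
    qed
    show "((\<lambda>y. C * \<bar>y - x\<bar>) \<longlongrightarrow> 0) (at x)"
      by (rule tendsto_eq_intros | simp)+
  qed
  then have "((\<lambda>y. (F y - F x) / (y - x)) \<longlongrightarrow> D) (at x)" by (rule LIM_zero_cancel)
  then show ?thesis unfolding has_field_derivative_iff F_def D_def .
qed


definition wfn :: "real \<Rightarrow> real \<Rightarrow> real \<Rightarrow> real" where
  "wfn M s y = exp (s * ln (1 - y) + (M - s) * ln y)"
definition Lf :: "real \<Rightarrow> real \<Rightarrow> real \<Rightarrow> real" where
  "Lf M s y = (M - s) / y - s / (1 - y)"
definition Lf' :: "real \<Rightarrow> real \<Rightarrow> real \<Rightarrow> real" where
  "Lf' M s y = - ((M - s) / y\<^sup>2) - s / (1 - y)\<^sup>2"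
definition Qf :: "real \<Rightarrow> real \<Rightarrow> real \<Rightarrow> real" where
  "Qf M s y = (Lf M s y)\<^sup>2 + Lf' M s y"
definition Qf' :: "real \<Rightarrow> real \<Rightarrow> real \<Rightarrow> real" where
  "Qf' M s y = 2 * Lf M s y * Lf' M s y + (2 * (M - s) / y ^ 3 - 2 * s / (1 - y) ^ 3)"
definition Rf :: "real \<Rightarrow> real \<Rightarrow> real \<Rightarrow> real" where
  "Rf M s y = Lf M s y * Qf M s y + Qf' M s y"

lemma rbinom_rGamma: "rbinom M s = Gamma (M + 1) * rGamma (s + 1) * rGamma (M - s + 1)"
  unfolding rbinom_def Gamma_def by (simp add: field_simps)

lemma wf_powr: "0 < y \<Longrightarrow> y < 1 \<Longrightarrow> (1 - y) powr s * y powr (M - s) = wfn M s y"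
  unfolding wfn_def powr_def by (simp add: exp_add)

lemma wf_pos: "0 < wfn M s y" unfolding wfn_def by simp

lemma d_wf: assumes y: "0 < y" "y < 1" shows "((\<lambda>y. wfn M s y) has_real_derivative (wfn M s y * Lf M s y)) (at y)"
proof -
  have nz: "y \<noteq> 0" "1 - y \<noteq> 0" "0 < 1 - y" using y by auto
  have a: "((\<lambda>y. ln (1 - y)) has_real_derivative (1 / (1 - y) * (0 - 1))) (at y)"
    by (rule DERIV_chain2[OF DERIV_ln_divide[OF nz(3)] DERIV_diff[OF DERIV_const DERIV_ident]])
  have b: "(ln has_real_derivative 1 / y) (at y)" by (rule DERIV_ln_divide[OF y(1)])
  have c: "((\<lambda>y. s * ln (1 - y) + (M - s) * ln y) has_real_derivative (s * (1 / (1 - y) * (0 - 1)) + (M - s) * (1 / y))) (at y)"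
    by (intro DERIV_add DERIV_cmult a b)
  have d: "((\<lambda>y. exp (s * ln (1 - y) + (M - s) * ln y)) has_real_derivative
      exp (s * ln (1 - y) + (M - s) * ln y) * (s * (1 / (1 - y) * (0 - 1)) + (M - s) * (1 / y))) (at y)"
    by (rule DERIV_chain2[OF DERIV_exp c])
  show ?thesis unfolding wfn_def Lf_def
    by (rule DERIV_cong[OF d]) (simp add: algebra_simps)
qed

lemma d_Lf: assumes y: "0 < y" "y < 1" shows "((\<lambda>y. Lf M s y) has_real_derivative (Lf' M s y)) (at y)"
proof -
  have nz: "y \<noteq> 0" "1 - y \<noteq> 0" "0 < 1 - y" using y by auto
  have a: "((\<lambda>y. (M - s) / y) has_real_derivative ((0 * y - (M - s) * 1) / (y * y))) (at y)"
    by (rule DERIV_divide[OF DERIV_const DERIV_ident nz(1)])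
  have b: "((\<lambda>y. s / (1 - y)) has_real_derivative ((0 * (1 - y) - s * (0 - 1)) / ((1 - y) * (1 - y)))) (at y)"
    by (rule DERIV_divide[OF DERIV_const DERIV_diff[OF DERIV_const DERIV_ident] nz(2)])
  have c: "((\<lambda>y. (M - s) / y - s / (1 - y)) has_real_derivative
       ((0 * y - (M - s) * 1) / (y * y) - (0 * (1 - y) - s * (0 - 1)) / ((1 - y) * (1 - y)))) (at y)"
    by (rule DERIV_diff[OF a b])
  show ?thesis unfolding Lf_def Lf'_def
    by (rule DERIV_cong[OF c]) (simp add: power2_eq_square minus_divide_left)
qed

lemma e1_aux: "(y::real) \<noteq> 0 \<Longrightarrow> (M - s) * ((1 * y + y * 1) * inverse ((y * y) ^ Suc (Suc 0))) = 2 * (M - s) / y ^ 3"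
  by (simp add: field_simps eval_nat_numeral)

lemma e2_aux: "(z::real) \<noteq> 0 \<Longrightarrow> s * (((0 - 1) * z + z * (0 - 1)) * inverse ((z * z) ^ Suc (Suc 0))) = - (2 * s / z ^ 3)"
  by (simp add: field_simps eval_nat_numeral)

lemma d_Lf': assumes y: "0 < y" "y < 1" shows "((\<lambda>y. Lf' M s y) has_real_derivative (2 * (M - s) / y ^ 3 - 2 * s / (1 - y) ^ 3)) (at y)"
proof -
  have nz: "y \<noteq> 0" "1 - y \<noteq> 0" "0 < 1 - y" using y by auto
  have sq: "((\<lambda>y. y * y) has_real_derivative (1 * y + y * 1)) (at y)" by (rule DERIV_cong[OF DERIV_mult'[OF DERIV_ident DERIV_ident]]) simp
  have inv: "((\<lambda>y. inverse (y * y)) has_real_derivative (- ((1 * y + y * 1) * inverse ((y * y) ^ Suc (Suc 0))))) (at y)"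
    by (rule DERIV_inverse_fun[OF sq]) (use nz in simp)
  have a: "((\<lambda>y. (M - s) * inverse (y * y)) has_real_derivative ((M - s) * (- ((1 * y + y * 1) * inverse ((y * y) ^ Suc (Suc 0)))))) (at y)"
    by (rule DERIV_cmult[OF inv])
  have om: "((\<lambda>y. 1 - y) has_real_derivative (0 - 1)) (at y)" by (rule DERIV_diff[OF DERIV_const DERIV_ident])
  have sq2: "((\<lambda>y. (1 - y) * (1 - y)) has_real_derivative ((0 - 1) * (1 - y) + (1 - y) * (0 - 1))) (at y)"
    by (rule DERIV_cong[OF DERIV_mult'[OF om om]]) simp
  have inv2: "((\<lambda>y. inverse ((1 - y) * (1 - y))) has_real_derivative
      (- (((0 - 1) * (1 - y) + (1 - y) * (0 - 1)) * inverse (((1 - y) * (1 - y)) ^ Suc (Suc 0))))) (at y)"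
    by (rule DERIV_inverse_fun[OF sq2]) (use nz in simp)
  have b: "((\<lambda>y. s * inverse ((1 - y) * (1 - y))) has_real_derivative
      (s * (- (((0 - 1) * (1 - y) + (1 - y) * (0 - 1)) * inverse (((1 - y) * (1 - y)) ^ Suc (Suc 0)))))) (at y)"
    by (rule DERIV_cmult[OF inv2])
  have c: "((\<lambda>y. - ((M - s) * inverse (y * y)) - s * inverse ((1 - y) * (1 - y))) has_real_derivative
      (- ((M - s) * (- ((1 * y + y * 1) * inverse ((y * y) ^ Suc (Suc 0))))) -
        (s * (- (((0 - 1) * (1 - y) + (1 - y) * (0 - 1)) * inverse (((1 - y) * (1 - y)) ^ Suc (Suc 0))))))) (at y)"
    by (rule DERIV_diff[OF DERIV_minus[OF a] b])
  have e1: "(M - s) * ((1 * y + y * 1) * inverse ((y * y) ^ Suc (Suc 0))) = 2 * (M - s) / y ^ 3"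
    by (rule e1_aux[OF nz(1)])
  have e2: "s * (((0 - 1) * (1 - y) + (1 - y) * (0 - 1)) * inverse (((1 - y) * (1 - y)) ^ Suc (Suc 0))) = - (2 * s / (1 - y) ^ 3)"
    by (rule e2_aux[OF nz(2)])
  have f: "(\<lambda>y. Lf' M s y) = (\<lambda>y. - ((M - s) * inverse (y * y)) - s * inverse ((1 - y) * (1 - y)))"
    unfolding Lf'_def by (simp add: power2_eq_square divide_inverse)
  have g: "- ((M - s) * (- ((1 * y + y * 1) * inverse ((y * y) ^ Suc (Suc 0))))) -
        (s * (- (((0 - 1) * (1 - y) + (1 - y) * (0 - 1)) * inverse (((1 - y) * (1 - y)) ^ Suc (Suc 0)))))
      = 2 * (M - s) / y ^ 3 - 2 * s / (1 - y) ^ 3"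
    unfolding mult_minus_right minus_minus e1 e2 by simp
  show ?thesis unfolding f by (rule DERIV_cong[OF c g])
qed

lemma d_wL: "0 < y \<Longrightarrow> y < 1 \<Longrightarrow> ((\<lambda>y. wfn M s y * Lf M s y) has_real_derivative (wfn M s y * Qf M s y)) (at y)"
proof -
  assume y: "0 < y" "y < 1"
  have "((\<lambda>y. wfn M s y * Lf M s y) has_real_derivative (wfn M s y * Lf M s y * Lf M s y + Lf' M s y * wfn M s y)) (at y)"
    by (rule DERIV_mult[OF d_wf[OF y] d_Lf[OF y]])
  then show ?thesis unfolding Qf_def by (simp add: algebra_simps power2_eq_square)
qed

lemma d_Qf: "0 < y \<Longrightarrow> y < 1 \<Longrightarrow> ((\<lambda>y. Qf M s y) has_real_derivative (Qf' M s y)) (at y)"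
proof -
  assume y: "0 < y" "y < 1"
  have "((\<lambda>y. Lf M s y * Lf M s y + Lf' M s y) has_real_derivative
      (Lf' M s y * Lf M s y + Lf' M s y * Lf M s y + (2 * (M - s) / y ^ 3 - 2 * s / (1 - y) ^ 3))) (at y)"
    by (intro DERIV_add DERIV_mult d_Lf[OF y] d_Lf'[OF y])
  then show ?thesis unfolding Qf_def Qf'_def by (simp add: algebra_simps power2_eq_square)
qed

lemma d_wQ: "0 < y \<Longrightarrow> y < 1 \<Longrightarrow> ((\<lambda>y. wfn M s y * Qf M s y) has_real_derivative (wfn M s y * Rf M s y)) (at y)"
proof -
  assume y: "0 < y" "y < 1"
  have "((\<lambda>y. wfn M s y * Qf M s y) has_real_derivative (wfn M s y * Lf M s y * Qf M s y + Qf' M s y * wfn M s y)) (at y)"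
    by (rule DERIV_mult[OF d_wf[OF y] d_Qf[OF y]])
  then show ?thesis unfolding Rf_def by (simp add: algebra_simps)
qed

lemma compact_bound:
  fixes G :: "real \<Rightarrow> real \<Rightarrow> real"
  assumes "continuous_on ({0..M} \<times> {c..d}) (\<lambda>p. G (fst p) (snd p))"
  shows "\<exists>K. \<forall>s\<in>{0..M}. \<forall>y\<in>{c..d}. \<bar>G s y\<bar> \<le> K"
proof -
  have "compact ((\<lambda>p. G (fst p) (snd p)) ` ({0..M} \<times> {c..d}))"
    by (intro compact_continuous_image assms compact_Times compact_Icc)
  then obtain K where K: "\<forall>z\<in>(\<lambda>p. G (fst p) (snd p)) ` ({0..M} \<times> {c..d}). norm z \<le> K"
    using compact_imp_bounded bounded_iff by blast
  show ?thesis
  proof (intro exI ballI)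
    fix s y assume "s \<in> {0..M}" "y \<in> {c..d}"
    then have "(s, y) \<in> {0..M} \<times> {c..d}" by simp
    then have mem: "G s y \<in> (\<lambda>p. G (fst p) (snd p)) ` ({0..M} \<times> {c..d})"
      by (rule image_eqI[rotated]) simp
    have "norm (G s y) \<le> K" using K mem by blast
    then show "\<bar>G s y\<bar> \<le> K" by simp
  qed
qed


lemma compact_bound1:
  fixes g :: "real \<Rightarrow> real"
  assumes "continuous_on {0..M} g"
  shows "\<exists>K. \<forall>s\<in>{0..M}. \<bar>g s\<bar> \<le> K"
proof -
  have "compact (g ` {0..M})" by (intro compact_continuous_image assms compact_Icc)
  then obtain K where K: "\<forall>z\<in>g ` {0..M}. norm z \<le> K" using compact_imp_bounded bounded_iff by blast
  then show ?thesis by auto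
qed

lemma rGamma_cont_comp [continuous_intros]:
  fixes f :: "real \<Rightarrow> real"
  shows "continuous_on A f \<Longrightarrow> continuous_on A (\<lambda>x. rGamma (f x))"
  by (rule continuous_on_compose2[OF continuous_on_rGamma[of UNIV]]) auto

lemma rbinom_cont: "continuous_on A (\<lambda>s. rbinom M s)"
  unfolding rbinom_rGamma by (intro continuous_intros)

lemma rbinom_pos: "0 < s \<Longrightarrow> s < M \<Longrightarrow> 0 < rbinom M s"
  unfolding rbinom_def using Gamma_real_pos[of "M + 1"] Gamma_real_pos[of "s + 1"] Gamma_real_pos[of "M - s + 1"]
  by simp

definition ca :: "real \<Rightarrow> (real \<Rightarrow> real) \<Rightarrow> real \<Rightarrow> real" where
  "ca M \<alpha> s = indicator {0<..<M} s * (\<alpha> s * rbinom M s)"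

context
  fixes M :: real and \<alpha> :: "real \<Rightarrow> real"
  assumes M1: "M > 1" and lc: "log_concave_on {0<..<M} \<alpha>"
begin


lemma ca_nonneg: "0 \<le> ca M \<alpha> s"
  unfolding ca_def using lc_nonneg[OF lc] rbinom_pos[of s M] by (auto simp: indicator_def less_imp_le)

lemma ca_meas: "ca M \<alpha> \<in> borel_measurable borel"
proof -
  have "(\<lambda>s. indicator {0<..<M} s * \<alpha> s) \<in> borel_measurable borel" by (rule lc_measurable[OF lc])
  moreover have "(\<lambda>s. indicator {0<..<M} s *\<^sub>R rbinom M s) \<in> borel_measurable borel"
    by (intro borel_measurable_continuous_on_indicator rbinom_cont) auto
  ultimately have "(\<lambda>s. (indicator {0<..<M} s * \<alpha> s) * (indicator {0<..<M} s *\<^sub>R rbinom M s)) \<in> borel_measurable borel"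
    by measurable
  moreover have "(\<lambda>s. (indicator {0<..<M} s * \<alpha> s) * (indicator {0<..<M} s *\<^sub>R rbinom M s)) = ca M \<alpha>"
    unfolding ca_def by (auto simp: indicator_def fun_eq_iff)
  ultimately show ?thesis by simp
qed

lemma ca_bounded: "\<exists>K. \<forall>s. \<bar>ca M \<alpha> s\<bar> \<le> K"
proof -
  obtain Ka where Ka: "\<forall>s\<in>{0<..<M}. \<alpha> s \<le> Ka" using lc_bounded[OF lc] by blast
  obtain Kr where Kr: "\<forall>s\<in>{0..M}. \<bar>rbinom M s\<bar> \<le> Kr" using compact_bound1[OF rbinom_cont] by blast
  have "\<bar>ca M \<alpha> s\<bar> \<le> \<bar>Ka\<bar> * \<bar>Kr\<bar>" for s
  proof (cases "s \<in> {0<..<M}")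
    case True
    then have "\<bar>ca M \<alpha> s\<bar> = \<alpha> s * \<bar>rbinom M s\<bar>" unfolding ca_def using lc_nonneg[OF lc] by (simp add: abs_mult)
    also have "\<dots> \<le> \<bar>Ka\<bar> * \<bar>Kr\<bar>"
    proof (intro mult_mono)
      have "\<alpha> s \<le> Ka" using Ka True by blast
      then show "\<alpha> s \<le> \<bar>Ka\<bar>" by linarith
      have "\<bar>rbinom M s\<bar> \<le> Kr" using Kr True by auto
      then show "\<bar>rbinom M s\<bar> \<le> \<bar>Kr\<bar>" by linarith
    qed (use lc_nonneg[OF lc True] in auto)
    finally show ?thesis .
  qed (simp add: ca_def)
  then show ?thesis by blast
qed

lemma int_g:
  assumes "continuous_on {0..M} g"
  shows "integrable lborel (\<lambda>s. ca M \<alpha> s * g s)" "\<exists>K. \<forall>s. \<bar>ca M \<alpha> s * g s\<bar> \<le> K"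
proof -
  obtain Kc where Kc: "\<forall>s. \<bar>ca M \<alpha> s\<bar> \<le> Kc" using ca_bounded by blast
  obtain Kg where Kg: "\<forall>s\<in>{0..M}. \<bar>g s\<bar> \<le> Kg" using compact_bound1[OF assms] by blast
  have bd: "\<bar>ca M \<alpha> s * g s\<bar> \<le> \<bar>Kc\<bar> * \<bar>Kg\<bar>" for s
  proof (cases "s \<in> {0<..<M}")
    case True
    then have "\<bar>g s\<bar> \<le> Kg" using Kg by auto
    then have "\<bar>g s\<bar> \<le> \<bar>Kg\<bar>" by linarith
    moreover have "\<bar>ca M \<alpha> s\<bar> \<le> Kc" using Kc by blast
    then have "\<bar>ca M \<alpha> s\<bar> \<le> \<bar>Kc\<bar>" by linarith
    ultimately show ?thesis by (simp add: abs_mult mult_mono')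
  qed (simp add: ca_def)
  then show "\<exists>K. \<forall>s. \<bar>ca M \<alpha> s * g s\<bar> \<le> K" by blast
  have gm: "(\<lambda>s. indicator {0<..<M} s *\<^sub>R g s) \<in> borel_measurable borel"
    by (intro borel_measurable_continuous_on_indicator continuous_on_subset[OF assms]) auto
  have "(\<lambda>s. ca M \<alpha> s * (indicator {0<..<M} s *\<^sub>R g s)) \<in> borel_measurable borel"
    using ca_meas gm by measurable
  moreover have "(\<lambda>s. ca M \<alpha> s * (indicator {0<..<M} s *\<^sub>R g s)) = (\<lambda>s. ca M \<alpha> s * g s)"
    unfolding ca_def by (auto simp: indicator_def fun_eq_iff)
  ultimately have m: "(\<lambda>s. ca M \<alpha> s * g s) \<in> borel_measurable lborel" by simp
  show "integrable lborel (\<lambda>s. ca M \<alpha> s * g s)"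
  proof (rule integrableI_bounded_set[where A="{0<..<M}" and B="\<bar>Kc\<bar> * \<bar>Kg\<bar>"])
    show "{0<..<M} \<in> sets lborel" by simp
    show "(\<lambda>s. ca M \<alpha> s * g s) \<in> borel_measurable lborel" by (rule m)
    show "emeasure lborel {0<..<M} < \<infinity>" using M1 by simp
    show "AE x\<in>{0<..<M} in lborel. norm (ca M \<alpha> x * g x) \<le> \<bar>Kc\<bar> * \<bar>Kg\<bar>" using bd by simp
    show "AE x in lborel. x \<notin> {0<..<M} \<longrightarrow> ca M \<alpha> x * g x = 0" by (simp add: ca_def)
  qed
qed

end


lemma cont_s:
  assumes y: "0 < y" "y < 1"
  shows "continuous_on A (\<lambda>s. wfn M s y)" "continuous_on A (\<lambda>s. wfn M s y * Lf M s y)"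
    "continuous_on A (\<lambda>s. wfn M s y * Qf M s y)"
  using y unfolding wfn_def Lf_def Qf_def Lf'_def by (auto intro!: continuous_intros)

lemma cont_pair:
  assumes cd: "0 < c" "d < 1"
  shows "continuous_on ({0..M} \<times> {c..d}) (\<lambda>p. wfn M (fst p) (snd p) * Qf M (fst p) (snd p))"
    "continuous_on ({0..M} \<times> {c..d}) (\<lambda>p. wfn M (fst p) (snd p) * Rf M (fst p) (snd p))"
proof -
  have pos: "\<forall>p\<in>{0..M} \<times> {c..d}. 0 < snd p \<and> 0 < 1 - snd p" using cd by auto
  show "continuous_on ({0..M} \<times> {c..d}) (\<lambda>p. wfn M (fst p) (snd p) * Qf M (fst p) (snd p))"
    unfolding wfn_def Qf_def Lf_def Lf'_def using pos by (intro continuous_intros) auto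
  show "continuous_on ({0..M} \<times> {c..d}) (\<lambda>p. wfn M (fst p) (snd p) * Rf M (fst p) (snd p))"
    unfolding wfn_def Rf_def Qf_def Qf'_def Lf_def Lf'_def using pos by (intro continuous_intros) auto
qed

context
  fixes M :: real and \<alpha> :: "real \<Rightarrow> real"
  assumes M1: "M > 1" and lc: "log_concave_on {0<..<M} \<alpha>"
begin

lemma ca_supp: "ca M \<alpha> s \<noteq> 0 \<Longrightarrow> s \<in> {0<..<M}"
  unfolding ca_def by (auto simp: indicator_def split: if_splits)

lemma F_deriv:
  assumes x: "0 < x" "x < 1"
  shows "((\<lambda>y. \<integral>s. ca M \<alpha> s * wfn M s y \<partial>lborel) has_real_derivative (\<integral>s. ca M \<alpha> s * (wfn M s x * Lf M s x) \<partial>lborel)) (at x)"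
    "((\<lambda>y. \<integral>s. ca M \<alpha> s * (wfn M s y * Lf M s y) \<partial>lborel) has_real_derivative (\<integral>s. ca M \<alpha> s * (wfn M s x * Qf M s x) \<partial>lborel)) (at x)"
proof -
  define c where "c = x / 2"
  define d where "d = (1 + x) / 2"
  have cd: "0 < c" "d < 1" "c < x" "x < d" using x unfolding c_def d_def by auto
  have xJ: "x \<in> {c<..<d}" using cd by auto
  have yJ: "0 < y \<and> y < 1" if "y \<in> {c<..<d}" for y using that cd by auto
  obtain K2 where K2: "\<forall>s\<in>{0..M}. \<forall>y\<in>{c..d}. \<bar>wfn M s y * Qf M s y\<bar> \<le> K2"
    using compact_bound[OF cont_pair(1)[OF cd(1,2)]] by blast
  obtain K3 where K3: "\<forall>s\<in>{0..M}. \<forall>y\<in>{c..d}. \<bar>wfn M s y * Rf M s y\<bar> \<le> K3"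
    using compact_bound[OF cont_pair(2)[OF cd(1,2)]] by blast
  have intK: "integrable lborel (\<lambda>s. ca M \<alpha> s * K)" for K
    using int_g(1)[OF M1 lc continuous_on_const] .
  have ig0: "integrable lborel (\<lambda>s. ca M \<alpha> s * wfn M s y)" if "y \<in> {c<..<d}" for y
    using int_g(1)[OF M1 lc cont_s(1)] yJ[OF that] by blast
  have ig1: "integrable lborel (\<lambda>s. ca M \<alpha> s * (wfn M s y * Lf M s y))" if "y \<in> {c<..<d}" for y
    using int_g(1)[OF M1 lc cont_s(2)] yJ[OF that] by blast
  have ig2: "integrable lborel (\<lambda>s. ca M \<alpha> s * (wfn M s y * Qf M s y))" if "y \<in> {c<..<d}" for y
    using int_g(1)[OF M1 lc cont_s(3)] yJ[OF that] by blast
  show "((\<lambda>y. \<integral>s. ca M \<alpha> s * wfn M s y \<partial>lborel) has_real_derivative (\<integral>s. ca M \<alpha> s * (wfn M s x * Lf M s x) \<partial>lborel)) (at x)"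
  proof (rule deriv_int[where a=c and b=d and Hb="\<lambda>s y. ca M \<alpha> s * (wfn M s y * Qf M s y)" and B="\<lambda>s. ca M \<alpha> s * K2"])
    show "x \<in> {c<..<d}" by (rule xJ)
    show "integrable lborel (\<lambda>s. ca M \<alpha> s * wfn M s y)" if "y \<in> {c<..<d}" for y using ig0[OF that] .
    show "integrable lborel (\<lambda>s. ca M \<alpha> s * (wfn M s x * Lf M s x))" using ig1[OF xJ] .
    show "integrable lborel (\<lambda>s. ca M \<alpha> s * K2)" by (rule intK)
    show "((\<lambda>y. ca M \<alpha> s * wfn M s y) has_real_derivative ca M \<alpha> s * (wfn M s y * Lf M s y)) (at y)"
      if "y \<in> {c<..<d}" for s y using yJ[OF that] by (intro DERIV_cmult d_wf) auto
    show "((\<lambda>y. ca M \<alpha> s * (wfn M s y * Lf M s y)) has_real_derivative ca M \<alpha> s * (wfn M s y * Qf M s y)) (at y)"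
      if "y \<in> {c<..<d}" for s y using yJ[OF that] by (intro DERIV_cmult d_wL) auto
    show "\<bar>ca M \<alpha> s * (wfn M s y * Qf M s y)\<bar> \<le> ca M \<alpha> s * K2" if "y \<in> {c<..<d}" for s y
    proof (cases "ca M \<alpha> s = 0")
      case False
      then have "s \<in> {0<..<M}" by (rule ca_supp)
      then have "s \<in> {0..M}" by simp
      moreover have "y \<in> {c..d}" using that by auto
      ultimately have "\<bar>wfn M s y * Qf M s y\<bar> \<le> K2" using K2 by blast
      then show ?thesis using ca_nonneg[OF M1 lc, of s] by (simp add: abs_mult mult_left_mono)
    qed simp
  qed
  show "((\<lambda>y. \<integral>s. ca M \<alpha> s * (wfn M s y * Lf M s y) \<partial>lborel) has_real_derivative (\<integral>s. ca M \<alpha> s * (wfn M s x * Qf M s x) \<partial>lborel)) (at x)"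
  proof (rule deriv_int[where a=c and b=d and Hb="\<lambda>s y. ca M \<alpha> s * (wfn M s y * Rf M s y)" and B="\<lambda>s. ca M \<alpha> s * K3"])
    show "x \<in> {c<..<d}" by (rule xJ)
    show "integrable lborel (\<lambda>s. ca M \<alpha> s * (wfn M s y * Lf M s y))" if "y \<in> {c<..<d}" for y using ig1[OF that] .
    show "integrable lborel (\<lambda>s. ca M \<alpha> s * (wfn M s x * Qf M s x))" using ig2[OF xJ] .
    show "integrable lborel (\<lambda>s. ca M \<alpha> s * K3)" by (rule intK)
    show "((\<lambda>y. ca M \<alpha> s * (wfn M s y * Lf M s y)) has_real_derivative ca M \<alpha> s * (wfn M s y * Qf M s y)) (at y)"
      if "y \<in> {c<..<d}" for s y using yJ[OF that] by (intro DERIV_cmult d_wL) auto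
    show "((\<lambda>y. ca M \<alpha> s * (wfn M s y * Qf M s y)) has_real_derivative ca M \<alpha> s * (wfn M s y * Rf M s y)) (at y)"
      if "y \<in> {c<..<d}" for s y using yJ[OF that] by (intro DERIV_cmult d_wQ) auto
    show "\<bar>ca M \<alpha> s * (wfn M s y * Rf M s y)\<bar> \<le> ca M \<alpha> s * K3" if "y \<in> {c<..<d}" for s y
    proof (cases "ca M \<alpha> s = 0")
      case False
      then have "s \<in> {0<..<M}" by (rule ca_supp)
      then have "s \<in> {0..M}" by simp
      moreover have "y \<in> {c..d}" using that by auto
      ultimately have "\<bar>wfn M s y * Rf M s y\<bar> \<le> K3" using K3 by blast
      then show ?thesis using ca_nonneg[OF M1 lc, of s] by (simp add: abs_mult mult_left_mono)
    qed simp
  qed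
qed

end


lemma pos_not_nonpos_Int: "0 < (z::real) \<Longrightarrow> z \<notin> \<int>\<^sub>\<le>\<^sub>0"
  using nonpos_Ints_nonpos by force

lemma Gamma_step: "0 < (z::real) \<Longrightarrow> Gamma (z + 1) = z * Gamma z"
  using Gamma_plus1 pos_not_nonpos_Int by blast

lemma div_cancel_aux: "(X::real) \<noteq> 0 \<Longrightarrow> Y \<noteq> 0 \<Longrightarrow> G / (X * Y) * X = G / Y"
  by (simp add: field_simps)

lemma kA: assumes "1 < s" "s < M" shows "rbinom M s * (s * (s - 1)) = Gamma (M + 1) / (Gamma (s - 1) * Gamma (M - s + 1))"
proof -
  have g1: "Gamma (s + 1) = s * Gamma s" using assms by (intro Gamma_step) auto
  have g2: "Gamma s = (s - 1) * Gamma (s - 1)" using Gamma_step[of "s - 1"] assms by simp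
  have p: "0 < Gamma (s - 1)" "s \<noteq> 0" "s - 1 \<noteq> 0" using assms Gamma_real_pos[of "s - 1"] by auto
  have "s * ((s - 1) * Gamma (s - 1)) * Gamma (M - s + 1) = (s * (s - 1)) * (Gamma (s - 1) * Gamma (M - s + 1))"
    by (simp add: algebra_simps)
  moreover have "0 < M - s + 1" using assms by simp
  then have "Gamma (M - s + 1) \<noteq> 0" using Gamma_real_pos[of "M - s + 1"] by linarith
  ultimately show ?thesis unfolding rbinom_def g1 g2 using p by (simp add: div_cancel_aux)
qed

lemma kB: assumes "0 < s" "s < M" shows "rbinom M s * (s * (M - s)) = Gamma (M + 1) / (Gamma s * Gamma (M - s))"
proof -
  have g1: "Gamma (s + 1) = s * Gamma s" using assms by (intro Gamma_step) auto
  have g2: "Gamma (M - s + 1) = (M - s) * Gamma (M - s)" using assms by (intro Gamma_step) auto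
  have p: "0 < Gamma s" "0 < Gamma (M - s)" "s \<noteq> 0" "M - s \<noteq> 0" using assms Gamma_real_pos by auto
  have "s * Gamma s * ((M - s) * Gamma (M - s)) = (s * (M - s)) * (Gamma s * Gamma (M - s))"
    by (simp add: algebra_simps)
  then show ?thesis unfolding rbinom_def g1 g2 using p by (simp add: div_cancel_aux)
qed

lemma kC: assumes "0 < s" "s < M - 1" shows "rbinom M s * ((M - s) * (M - s - 1)) = Gamma (M + 1) / (Gamma (s + 1) * Gamma (M - s - 1))"
proof -
  have g1: "Gamma (M - s + 1) = (M - s) * Gamma (M - s)" using assms by (intro Gamma_step) auto
  have g2: "Gamma (M - s) = (M - s - 1) * Gamma (M - s - 1)" using Gamma_step[of "M - s - 1"] assms by simp
  have p: "0 < Gamma (s + 1)" "0 < Gamma (M - s - 1)" "M - s \<noteq> 0" "M - s - 1 \<noteq> 0"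
    using assms Gamma_real_pos[of "s + 1"] Gamma_real_pos[of "M - s - 1"] by auto
  have "Gamma (s + 1) * ((M - s) * ((M - s - 1) * Gamma (M - s - 1))) = ((M - s) * (M - s - 1)) * (Gamma (s + 1) * Gamma (M - s - 1))"
    by (simp add: algebra_simps)
  then show ?thesis unfolding rbinom_def g1 g2 using p by (simp add: div_cancel_aux)
qed

lemma wfn_exp: "wfn M s x = exp ((ln (1 - x) - ln x) * s + M * ln x)"
  unfolding wfn_def by (simp add: algebra_simps)

lemma wfn_mid: "wfn M p x * wfn M q x = (wfn M ((p + q) / 2) x)\<^sup>2"
  unfolding wfn_def by (simp add: power2_eq_square exp_add[symmetric] algebra_simps add_divide_distrib)

lemma sq_powr_half: "0 \<le> (a::real) \<Longrightarrow> (a powr (1/2))\<^sup>2 = a"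
  by (simp add: powr_half_sqrt)

lemma gamma_mid: fixes u v :: real assumes "0 < u" "0 < v" shows "(Gamma ((u + v) / 2))\<^sup>2 \<le> Gamma u * Gamma v"
proof -
  have "Gamma ((1/2) * u + (1 - 1/2) * v) \<le> Gamma u powr (1/2) * Gamma v powr (1 - 1/2)"
    using assms by (intro Gamma_lc) auto
  then have le: "Gamma ((u + v) / 2) \<le> Gamma u powr (1/2) * Gamma v powr (1/2)" by (simp add: add_divide_distrib)
  have "0 < (u + v) / 2" using assms by simp
  then have "0 \<le> Gamma ((u + v) / 2)" using Gamma_real_pos by (simp add: less_imp_le)
  then have "(Gamma ((u + v) / 2))\<^sup>2 \<le> (Gamma u powr (1/2) * Gamma v powr (1/2))\<^sup>2"
    using le by (intro power_mono) auto
  also have "\<dots> = Gamma u * Gamma v"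
    using Gamma_real_pos[OF assms(1)] Gamma_real_pos[OF assms(2)]
    by (simp add: power_mult_distrib sq_powr_half less_imp_le)
  finally show ?thesis .
qed

lemma lc_mid: assumes lc: "log_concave_on S \<phi>" and pq: "p \<in> S" "q \<in> S"
  shows "\<phi> p * \<phi> q \<le> (\<phi> ((p + q) / 2))\<^sup>2"
proof -
  have "\<phi> p powr (1/2) * \<phi> q powr (1 - 1/2) \<le> \<phi> ((1/2) * p + (1 - 1/2) * q)"
    by (rule lc_ineq[OF lc pq]) auto
  then have le: "\<phi> p powr (1/2) * \<phi> q powr (1/2) \<le> \<phi> ((p + q) / 2)" by (simp add: add_divide_distrib)
  have "(\<phi> p powr (1/2) * \<phi> q powr (1/2))\<^sup>2 \<le> (\<phi> ((p + q) / 2))\<^sup>2"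
    using le by (intro power_mono) auto
  moreover have "(\<phi> p powr (1/2) * \<phi> q powr (1/2))\<^sup>2 = \<phi> p * \<phi> q"
    using lc_nonneg[OF lc pq(1)] lc_nonneg[OF lc pq(2)] by (simp add: power_mult_distrib sq_powr_half)
  ultimately show ?thesis by simp
qed

lemma lc_cong_ivl:
  assumes "log_concave_on {lo<..<hi} \<phi>" "\<And>s. s \<in> {lo<..<hi} \<Longrightarrow> \<phi> s = \<psi> s"
  shows "log_concave_on {lo<..<hi} \<psi>"
  unfolding log_concave_on_def
proof (intro conjI ballI allI impI)
  fix s assume "s \<in> {lo<..<hi}" then show "0 \<le> \<psi> s" using assms lc_nonneg by fastforce
next
  fix p q l :: real assume p: "p \<in> {lo<..<hi}" and q: "q \<in> {lo<..<hi}" and l: "0 < l \<and> l < 1"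
  have m: "l * p + (1 - l) * q \<in> {lo<..<hi}"
    using convexD[of "{lo<..<hi}" p q l "1 - l"] p q l by simp
  have "\<phi> p powr l * \<phi> q powr (1 - l) \<le> \<phi> (l * p + (1 - l) * q)"
    using lc_ineq[OF assms(1) p q] l by auto
  then show "\<psi> p powr l * \<psi> q powr (1 - l) \<le> \<psi> (l * p + (1 - l) * q)"
    unfolding assms(2)[OF p] assms(2)[OF q] assms(2)[OF m] .
qed


definition Pint :: "real \<Rightarrow> (real \<Rightarrow> real) \<Rightarrow> real \<Rightarrow> (real \<Rightarrow> real) \<Rightarrow> real" where
  "Pint M \<alpha> x g = (\<integral>s. ca M \<alpha> s * (wfn M s x * g s) \<partial>lborel)"

context
  fixes M :: real and \<alpha> :: "real \<Rightarrow> real" and x :: real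
  assumes M1: "M > 1" and lc: "log_concave_on {0<..<M} \<alpha>" and x: "0 < x" "x < 1"
begin

lemma ca_in: "s \<in> {0<..<M} \<Longrightarrow> ca M \<alpha> s = \<alpha> s * rbinom M s" unfolding ca_def by simp
lemma ca_out: "s \<notin> {0<..<M} \<Longrightarrow> ca M \<alpha> s = 0" unfolding ca_def by simp

lemma contP: "continuous_on {0..M} g \<Longrightarrow> continuous_on {0..M} (\<lambda>s. wfn M s x * g s)"
  by (intro continuous_on_mult cont_s(1)[OF x])

lemma intP: "continuous_on {0..M} g \<Longrightarrow> integrable lborel (\<lambda>s. ca M \<alpha> s * (wfn M s x * g s))"
  by (rule int_g(1)[OF M1 lc contP])

lemma bndP: "continuous_on {0..M} g \<Longrightarrow> \<exists>K. \<forall>s. \<bar>ca M \<alpha> s * (wfn M s x * g s)\<bar> \<le> K"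
  by (rule int_g(2)[OF M1 lc contP])

definition \<kappa> where "\<kappa> = ln (1 - x) - ln x"

lemma lcA: "log_concave_on {1<..<M} (\<lambda>s. ca M \<alpha> s * (wfn M s x * (s * (s - 1))))"
proof (rule lc_cong_ivl)
  have "log_concave_on {1<..<M} (\<lambda>s. (((\<alpha> s * Gamma (M + 1)) * (1 / Gamma (s + - 1))) * (1 / Gamma ((M + 1) - s))) * exp (\<kappa> * s + M * ln x))"
    by (intro lc_mult lc_subset[OF lc] lc_const lc_rGamma1 lc_rGamma2 lc_exp) (use M1 Gamma_real_pos[of "M + 1"] in \<open>auto simp: less_imp_le\<close>)
  then show "log_concave_on {1<..<M} (\<lambda>s. (((\<alpha> s * Gamma (M + 1)) * (1 / Gamma (s + - 1))) * (1 / Gamma ((M + 1) - s))) * exp (\<kappa> * s + M * ln x))" .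
  fix s assume s: "s \<in> {1<..<M}"
  then have "ca M \<alpha> s * (wfn M s x * (s * (s - 1))) = \<alpha> s * (rbinom M s * (s * (s - 1))) * wfn M s x"
    using ca_in[of s] by (simp add: mult_ac)
  also have "\<dots> = \<alpha> s * (Gamma (M + 1) / (Gamma (s - 1) * Gamma (M - s + 1))) * exp (\<kappa> * s + M * ln x)"
    using kA[of s M] s unfolding wfn_exp \<kappa>_def by simp
  finally show "(((\<alpha> s * Gamma (M + 1)) * (1 / Gamma (s + - 1))) * (1 / Gamma ((M + 1) - s))) * exp (\<kappa> * s + M * ln x)
      = ca M \<alpha> s * (wfn M s x * (s * (s - 1)))"
    by (simp add: field_simps)
qed

lemma lcC: "log_concave_on {0<..<M-1} (\<lambda>s. ca M \<alpha> s * (wfn M s x * ((M - s) * (M - s - 1))))"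
proof (rule lc_cong_ivl)
  have "log_concave_on {0<..<M-1} (\<lambda>s. (((\<alpha> s * Gamma (M + 1)) * (1 / Gamma (s + 1))) * (1 / Gamma ((M - 1) - s))) * exp (\<kappa> * s + M * ln x))"
    by (intro lc_mult lc_subset[OF lc] lc_const lc_rGamma1 lc_rGamma2 lc_exp) (use M1 Gamma_real_pos[of "M + 1"] in \<open>auto simp: less_imp_le\<close>)
  then show "log_concave_on {0<..<M-1} (\<lambda>s. (((\<alpha> s * Gamma (M + 1)) * (1 / Gamma (s + 1))) * (1 / Gamma ((M - 1) - s))) * exp (\<kappa> * s + M * ln x))" .
  fix s assume s: "s \<in> {0<..<M-1}"
  then have "ca M \<alpha> s * (wfn M s x * ((M - s) * (M - s - 1))) = \<alpha> s * (rbinom M s * ((M - s) * (M - s - 1))) * wfn M s x"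
    using ca_in[of s] by (simp add: mult_ac)
  also have "\<dots> = \<alpha> s * (Gamma (M + 1) / (Gamma (s + 1) * Gamma (M - s - 1))) * exp (\<kappa> * s + M * ln x)"
    using kC[of s M] s unfolding wfn_exp \<kappa>_def by simp
  finally show "(((\<alpha> s * Gamma (M + 1)) * (1 / Gamma (s + 1))) * (1 / Gamma ((M - 1) - s))) * exp (\<kappa> * s + M * ln x)
      = ca M \<alpha> s * (wfn M s x * ((M - s) * (M - s - 1)))"
    by (simp add: field_simps)
qed

end


context
  fixes M :: real and \<alpha> :: "real \<Rightarrow> real" and x :: real
  assumes M1: "M > 1" and lc: "log_concave_on {0<..<M} \<alpha>" and x: "0 < x" "x < 1"
begin

lemma wpos: "0 < wfn M s x" by (rule wf_pos)
lemma canon: "0 \<le> ca M \<alpha> s" by (rule ca_nonneg[OF M1 lc])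

lemma PLapp:
  defines "fA \<equiv> \<lambda>s. indicator {1<..<M} s * (ca M \<alpha> s * (wfn M s x * (s * (s - 1))))"
    and "fC \<equiv> \<lambda>s. indicator {0<..<M-1} s * (ca M \<alpha> s * (wfn M s x * ((M - s) * (M - s - 1))))"
    and "hB \<equiv> \<lambda>s. ca M \<alpha> s * (wfn M s x * (s * (M - s)))"
  shows "integral\<^sup>L lborel fA * integral\<^sup>L lborel fC \<le> (integral\<^sup>L lborel hB)\<^sup>2"
    "integrable lborel fA" "integrable lborel fC"
proof -
  have c1: "continuous_on {0..M} (\<lambda>s. s * (s - 1))" by (intro continuous_intros)
  have c2: "continuous_on {0..M} (\<lambda>s. (M - s) * (M - s - 1))" by (intro continuous_intros)
  have c3: "continuous_on {0..M} (\<lambda>s. s * (M - s))" by (intro continuous_intros)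
  have iA0: "integrable lborel (\<lambda>s. ca M \<alpha> s * (wfn M s x * (s * (s - 1))))" by (rule intP[OF M1 lc x c1])
  have iC0: "integrable lborel (\<lambda>s. ca M \<alpha> s * (wfn M s x * ((M - s) * (M - s - 1))))" by (rule intP[OF M1 lc x c2])
  have iB: "integrable lborel hB" unfolding hB_def by (rule intP[OF M1 lc x c3])
  have iA: "integrable lborel fA" unfolding fA_def using integrable_mult_indicator[OF _ iA0, of "{1<..<M}"] by simp
  have iC: "integrable lborel fC" unfolding fC_def using integrable_mult_indicator[OF _ iC0, of "{0<..<M-1}"] by simp
  show "integrable lborel fA" "integrable lborel fC" by (fact iA) (fact iC)
  obtain KA where KA: "\<forall>s. \<bar>ca M \<alpha> s * (wfn M s x * (s * (s - 1)))\<bar> \<le> KA" using bndP[OF M1 lc x c1] by blast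
  obtain KC where KC: "\<forall>s. \<bar>ca M \<alpha> s * (wfn M s x * ((M - s) * (M - s - 1)))\<bar> \<le> KC" using bndP[OF M1 lc x c2] by blast
  have fAnn: "0 \<le> fA s" for s
  proof (cases "s \<in> {1<..<M}")
    case True then show ?thesis unfolding fA_def using canon[of s] wpos[of s] by (auto intro!: mult_nonneg_nonneg)
  qed (simp add: fA_def)
  have fCnn: "0 \<le> fC s" for s
  proof (cases "s \<in> {0<..<M-1}")
    case True then show ?thesis unfolding fC_def using canon[of s] wpos[of s] by (auto intro!: mult_nonneg_nonneg)
  qed (simp add: fC_def)
  have hBnn: "0 \<le> hB s" for s
  proof (cases "s \<in> {0<..<M}")
    case True then show ?thesis unfolding hB_def using canon[of s] wpos[of s] by (auto intro!: mult_nonneg_nonneg)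
  qed (simp add: hB_def ca_def)
  have fAb: "fA s \<le> KA" for s
  proof (cases "s \<in> {1<..<M}")
    case True then show ?thesis unfolding fA_def using KA[rule_format, of s] by simp
  next
    case False then show ?thesis unfolding fA_def using KA[rule_format, of s] by simp
  qed
  have fCb: "fC s \<le> KC" for s
  proof (cases "s \<in> {0<..<M-1}")
    case True then show ?thesis unfolding fC_def using KC[rule_format, of s] by simp
  next
    case False then show ?thesis unfolding fC_def using KC[rule_format, of s] by simp
  qed
  have fAs: "s \<in> {0..M}" if "0 < fA s" for s
  proof (rule ccontr)
    assume "s \<notin> {0..M}" then have "s \<notin> {1<..<M}" by auto
    then have "fA s = 0" unfolding fA_def by simp
    then show False using that by simp
  qed
  have fCs: "s \<in> {0..M}" if "0 < fC s" for s
  proof (rule ccontr)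
    assume "s \<notin> {0..M}" then have "s \<notin> {0<..<M-1}" by auto
    then have "fC s = 0" unfolding fC_def by simp
    then show False using that by simp
  qed
  have fAiv: "is_interval {s. t < fA s}" for t
    unfolding fA_def by (rule lc_level_interval[OF lcA[OF M1 lc x]])
  have fCiv: "is_interval {s. t < fC s}" for t
    unfolding fC_def by (rule lc_level_interval[OF lcC[OF M1 lc x]])
  have mid: "fA p * fC q \<le> (hB ((p + q) / 2))\<^sup>2" for p q
  proof (cases "p \<in> {1<..<M} \<and> q \<in> {0<..<M-1}")
    case False
    then have "fA p * fC q = 0" unfolding fA_def fC_def by auto
    then show ?thesis by (simp only:) simp
  next
    case True
    define m where "m = (p + q) / 2"
    define G where "G = Gamma (M + 1)"
    have p: "1 < p" "p < M" and q: "0 < q" "q < M - 1" using True by auto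
    have m: "0 < m" "m < M" using p q unfolding m_def by auto
    have Gp: "0 < G" unfolding G_def using M1 Gamma_real_pos[of "M + 1"] by simp
    have g1: "0 < Gamma (p - 1)" "0 < Gamma (M - p + 1)" "0 < Gamma (q + 1)" "0 < Gamma (M - q - 1)"
      "0 < Gamma m" "0 < Gamma (M - m)"
      using p q m Gamma_real_pos by auto
    have vA: "fA p = \<alpha> p * (G / (Gamma (p - 1) * Gamma (M - p + 1))) * wfn M p x"
    proof -
      have "fA p = \<alpha> p * (rbinom M p * (p * (p - 1))) * wfn M p x"
        unfolding fA_def using True ca_in[OF M1 lc x, of p] by (simp only: mult_ac indicator_simps, simp)
      then show ?thesis unfolding kA[OF p] G_def .
    qed
    have vC: "fC q = \<alpha> q * (G / (Gamma (q + 1) * Gamma (M - q - 1))) * wfn M q x"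
    proof -
      have "fC q = \<alpha> q * (rbinom M q * ((M - q) * (M - q - 1))) * wfn M q x"
        unfolding fC_def using True ca_in[OF M1 lc x, of q] by (simp only: mult_ac indicator_simps, simp)
      then show ?thesis unfolding kC[OF q] G_def .
    qed
    have vB: "hB m = \<alpha> m * (G / (Gamma m * Gamma (M - m))) * wfn M m x"
    proof -
      have "hB m = \<alpha> m * (rbinom M m * (m * (M - m))) * wfn M m x"
        unfolding hB_def using m ca_in[OF M1 lc x, of m] by (simp only: mult_ac, simp)
      then show ?thesis unfolding kB[OF m] G_def .
    qed
    have am: "\<alpha> p * \<alpha> q \<le> (\<alpha> m)\<^sup>2" unfolding m_def using lc_mid[OF lc, of p q] p q by simp
    have an: "0 \<le> \<alpha> p" "0 \<le> \<alpha> q" using lc_nonneg[OF lc] p q by auto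
    have gm1: "(Gamma m)\<^sup>2 \<le> Gamma (p - 1) * Gamma (q + 1)"
      using gamma_mid[of "p - 1" "q + 1"] p q unfolding m_def by (simp add: add_divide_distrib)
    have gm2: "(Gamma (M - m))\<^sup>2 \<le> Gamma (M - p + 1) * Gamma (M - q - 1)"
    proof -
      have e: "(M - p + 1 + (M - q - 1)) / 2 = M - m" unfolding m_def by (simp add: field_simps)
      have "(Gamma ((M - p + 1 + (M - q - 1)) / 2))\<^sup>2 \<le> Gamma (M - p + 1) * Gamma (M - q - 1)"
        by (rule gamma_mid) (use p q in auto)
      then show ?thesis unfolding e .
    qed
    have wm: "wfn M p x * wfn M q x = (wfn M m x)\<^sup>2" unfolding m_def by (rule wfn_mid)
    have "fA p * fC q = (\<alpha> p * \<alpha> q) * (G\<^sup>2 * (wfn M p x * wfn M q x)) / ((Gamma (p - 1) * Gamma (q + 1)) * (Gamma (M - p + 1) * Gamma (M - q - 1)))"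
      unfolding vA vC by (simp add: power2_eq_square field_simps)
    also have "\<dots> \<le> (\<alpha> m)\<^sup>2 * (G\<^sup>2 * (wfn M m x)\<^sup>2) / ((Gamma m)\<^sup>2 * (Gamma (M - m))\<^sup>2)"
    proof (rule frac_le)
      show "0 \<le> (\<alpha> m)\<^sup>2 * (G\<^sup>2 * (wfn M m x)\<^sup>2)" by simp
      show "\<alpha> p * \<alpha> q * (G\<^sup>2 * (wfn M p x * wfn M q x)) \<le> (\<alpha> m)\<^sup>2 * (G\<^sup>2 * (wfn M m x)\<^sup>2)"
        unfolding wm using am by (intro mult_right_mono) auto
      show "0 < (Gamma m)\<^sup>2 * (Gamma (M - m))\<^sup>2" using g1 by simp
      show "(Gamma m)\<^sup>2 * (Gamma (M - m))\<^sup>2 \<le> Gamma (p - 1) * Gamma (q + 1) * (Gamma (M - p + 1) * Gamma (M - q - 1))"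
        using gm1 gm2 g1 by (intro mult_mono) auto
    qed
    also have "\<dots> = (hB m)\<^sup>2" unfolding vB by (simp add: power2_eq_square field_simps)
    finally show ?thesis unfolding m_def .
  qed
  show "integral\<^sup>L lborel fA * integral\<^sup>L lborel fC \<le> (integral\<^sup>L lborel hB)\<^sup>2"
  proof (rule PL[where lo=0 and hi=M])
    show "fA \<in> borel_measurable lborel" using iA by (rule borel_measurable_integrable)
    show "fC \<in> borel_measurable lborel" using iC by (rule borel_measurable_integrable)
    show "hB \<in> borel_measurable lborel" using iB by (rule borel_measurable_integrable)
  qed (use fAnn fCnn hBnn iA iC iB fAb fCb fAs fCs fAiv fCiv mid in auto)
qed

end


lemma aux_h2: "(a::real) \<noteq> 0 \<Longrightarrow> b \<noteq> 0 \<Longrightarrow> (a * b)\<^sup>2 * (- (p / a\<^sup>2) - q / b\<^sup>2) = - (b\<^sup>2 * p) - a\<^sup>2 * q"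
  by (simp add: field_simps power2_eq_square)

lemma final_alg:
  fixes M x F0 F1 F2 A B C :: real
  assumes M1: "M > 1" and x: "0 < x" "x < 1"
    and i1: "M * (M - 1) * F0 = A + 2 * B + C"
    and i2: "(M - 1) * (x * (1 - x)) * F1 = (- x) * A + (1 - 2 * x) * B + (1 - x) * C"
    and i3: "(x * (1 - x))\<^sup>2 * F2 = x\<^sup>2 * A + (- (2 * x * (1 - x))) * B + (1 - x)\<^sup>2 * C"
    and bac: "A * C \<le> B\<^sup>2"
  shows "F0 * F2 \<le> (M - 1) / M * F1\<^sup>2"
proof -
  define D where "D = x * (1 - x)"
  have Dp: "0 < D" unfolding D_def using x by simp
  have key: "((- x) * A + (1 - 2 * x) * B + (1 - x) * C)\<^sup>2 - (A + 2 * B + C) * (x\<^sup>2 * A + (- (2 * x * (1 - x))) * B + (1 - x)\<^sup>2 * C)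
      = B\<^sup>2 - A * C"
    by (simp add: power2_eq_square algebra_simps)
  have e: "M * (M - 1) * D\<^sup>2 * ((M - 1) / M * F1\<^sup>2 - F0 * F2) = ((M - 1) * D * F1)\<^sup>2 - (M * (M - 1) * F0) * (D\<^sup>2 * F2)"
    using M1 by (simp add: field_simps power2_eq_square)
  also have "\<dots> = B\<^sup>2 - A * C" using i1 i2 i3 key unfolding D_def by simp
  finally have "0 \<le> M * (M - 1) * D\<^sup>2 * ((M - 1) / M * F1\<^sup>2 - F0 * F2)" using bac by simp
  moreover have "0 < M * (M - 1) * D\<^sup>2" using M1 Dp by simp
  ultimately have "0 \<le> (M - 1) / M * F1\<^sup>2 - F0 * F2" by (simp add: zero_le_mult_iff)
  then show ?thesis by simp
qed

context
  fixes M :: real and \<alpha> :: "real \<Rightarrow> real" and x :: real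
  assumes M1: "M > 1" and lc: "log_concave_on {0<..<M} \<alpha>" and x: "0 < x" "x < 1"
begin

lemma Pint_cmult: "Pint M \<alpha> x (\<lambda>s. k * g s) = k * Pint M \<alpha> x g"
  unfolding Pint_def by (simp add: algebra_simps)

lemma lin3:
  assumes "continuous_on {0..M} g1" "continuous_on {0..M} g2" "continuous_on {0..M} g3"
  shows "Pint M \<alpha> x (\<lambda>s. a * g1 s + b * g2 s + c * g3 s) = a * Pint M \<alpha> x g1 + b * Pint M \<alpha> x g2 + c * Pint M \<alpha> x g3"
proof -
  have i1: "integrable lborel (\<lambda>s. ca M \<alpha> s * (wfn M s x * g1 s))" by (rule intP[OF M1 lc x assms(1)])
  have i2: "integrable lborel (\<lambda>s. ca M \<alpha> s * (wfn M s x * g2 s))" by (rule intP[OF M1 lc x assms(2)])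
  have i3: "integrable lborel (\<lambda>s. ca M \<alpha> s * (wfn M s x * g3 s))" by (rule intP[OF M1 lc x assms(3)])
  have "(\<lambda>s. ca M \<alpha> s * (wfn M s x * (a * g1 s + b * g2 s + c * g3 s))) =
      (\<lambda>s. a * (ca M \<alpha> s * (wfn M s x * g1 s)) + b * (ca M \<alpha> s * (wfn M s x * g2 s)) + c * (ca M \<alpha> s * (wfn M s x * g3 s)))"
    by (simp add: fun_eq_iff algebra_simps)
  then show ?thesis unfolding Pint_def using i1 i2 i3 by simp
qed

lemma cpoly: "continuous_on {0..M} (\<lambda>s. s * (s - 1))" "continuous_on {0..M} (\<lambda>s. s * (M - s))"
  "continuous_on {0..M} (\<lambda>s. (M - s) * (M - s - 1))"
  by (intro continuous_intros)+

lemma iden1: "M * (M - 1) * Pint M \<alpha> x (\<lambda>s. 1) =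
   Pint M \<alpha> x (\<lambda>s. s * (s - 1)) + 2 * Pint M \<alpha> x (\<lambda>s. s * (M - s)) + Pint M \<alpha> x (\<lambda>s. (M - s) * (M - s - 1))"
proof -
  have "M * (M - 1) * Pint M \<alpha> x (\<lambda>s. 1) = Pint M \<alpha> x (\<lambda>s. M * (M - 1) * 1)" by (rule Pint_cmult[symmetric])
  also have "(\<lambda>s. M * (M - 1) * 1) = (\<lambda>s. 1 * (s * (s - 1)) + 2 * (s * (M - s)) + 1 * ((M - s) * (M - s - 1)))"
    by (simp add: fun_eq_iff algebra_simps)
  also have "Pint M \<alpha> x (\<lambda>s. 1 * (s * (s - 1)) + 2 * (s * (M - s)) + 1 * ((M - s) * (M - s - 1))) =
     1 * Pint M \<alpha> x (\<lambda>s. s * (s - 1)) + 2 * Pint M \<alpha> x (\<lambda>s. s * (M - s)) + 1 * Pint M \<alpha> x (\<lambda>s. (M - s) * (M - s - 1))"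
    by (rule lin3[OF cpoly])
  finally show ?thesis by simp
qed

lemma iden2: "(M - 1) * (x * (1 - x)) * Pint M \<alpha> x (\<lambda>s. Lf M s x) =
   (- x) * Pint M \<alpha> x (\<lambda>s. s * (s - 1)) + (1 - 2 * x) * Pint M \<alpha> x (\<lambda>s. s * (M - s)) + (1 - x) * Pint M \<alpha> x (\<lambda>s. (M - s) * (M - s - 1))"
proof -
  have "(M - 1) * (x * (1 - x)) * Pint M \<alpha> x (\<lambda>s. Lf M s x) = Pint M \<alpha> x (\<lambda>s. (M - 1) * (x * (1 - x)) * Lf M s x)"
    by (rule Pint_cmult[symmetric])
  also have "(\<lambda>s. (M - 1) * (x * (1 - x)) * Lf M s x) = (\<lambda>s. (- x) * (s * (s - 1)) + (1 - 2 * x) * (s * (M - s)) + (1 - x) * ((M - s) * (M - s - 1)))"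
  proof
    fix s
    have nz: "x \<noteq> 0" "1 - x \<noteq> 0" using x by auto
    have "(M - 1) * (x * (1 - x)) * Lf M s x = (M - 1) * ((1 - x) * (M - s) - x * s)"
      unfolding Lf_def using nz by (simp add: field_simps)
    also have "\<dots> = (- x) * (s * (s - 1)) + (1 - 2 * x) * (s * (M - s)) + (1 - x) * ((M - s) * (M - s - 1))"
      by (simp add: algebra_simps)
    finally show "(M - 1) * (x * (1 - x)) * Lf M s x = (- x) * (s * (s - 1)) + (1 - 2 * x) * (s * (M - s)) + (1 - x) * ((M - s) * (M - s - 1))" .
  qed
  also have "Pint M \<alpha> x (\<lambda>s. (- x) * (s * (s - 1)) + (1 - 2 * x) * (s * (M - s)) + (1 - x) * ((M - s) * (M - s - 1))) =
     (- x) * Pint M \<alpha> x (\<lambda>s. s * (s - 1)) + (1 - 2 * x) * Pint M \<alpha> x (\<lambda>s. s * (M - s)) + (1 - x) * Pint M \<alpha> x (\<lambda>s. (M - s) * (M - s - 1))"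
    by (rule lin3[OF cpoly])
  finally show ?thesis .
qed

lemma iden3: "(x * (1 - x))\<^sup>2 * Pint M \<alpha> x (\<lambda>s. Qf M s x) =
   x\<^sup>2 * Pint M \<alpha> x (\<lambda>s. s * (s - 1)) + (- (2 * x * (1 - x))) * Pint M \<alpha> x (\<lambda>s. s * (M - s)) + (1 - x)\<^sup>2 * Pint M \<alpha> x (\<lambda>s. (M - s) * (M - s - 1))"
proof -
  have "(x * (1 - x))\<^sup>2 * Pint M \<alpha> x (\<lambda>s. Qf M s x) = Pint M \<alpha> x (\<lambda>s. (x * (1 - x))\<^sup>2 * Qf M s x)"
    by (rule Pint_cmult[symmetric])
  also have "(\<lambda>s. (x * (1 - x))\<^sup>2 * Qf M s x) = (\<lambda>s. x\<^sup>2 * (s * (s - 1)) + (- (2 * x * (1 - x))) * (s * (M - s)) + (1 - x)\<^sup>2 * ((M - s) * (M - s - 1)))"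
  proof
    fix s
    have nz: "x \<noteq> 0" "1 - x \<noteq> 0" using x by auto
    have h1: "x * (1 - x) * Lf M s x = (1 - x) * (M - s) - x * s"
      unfolding Lf_def using nz by (simp add: field_simps)
    have h2: "(x * (1 - x))\<^sup>2 * Lf' M s x = - ((1 - x)\<^sup>2 * (M - s)) - x\<^sup>2 * s"
      unfolding Lf'_def using aux_h2[OF nz] by simp
    have "(x * (1 - x))\<^sup>2 * Qf M s x = (x * (1 - x) * Lf M s x)\<^sup>2 + (x * (1 - x))\<^sup>2 * Lf' M s x"
      unfolding Qf_def by (simp add: power2_eq_square algebra_simps)
    also have "\<dots> = ((1 - x) * (M - s) - x * s)\<^sup>2 - (1 - x)\<^sup>2 * (M - s) - x\<^sup>2 * s"
      unfolding h1 h2 by simp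
    finally have "(x * (1 - x))\<^sup>2 * Qf M s x = ((1 - x) * (M - s) - x * s)\<^sup>2 - (1 - x)\<^sup>2 * (M - s) - x\<^sup>2 * s" .
    also have "\<dots> = x\<^sup>2 * (s * (s - 1)) + (- (2 * x * (1 - x))) * (s * (M - s)) + (1 - x)\<^sup>2 * ((M - s) * (M - s - 1))"
      by (simp add: algebra_simps power2_eq_square)
    finally show "(x * (1 - x))\<^sup>2 * Qf M s x = x\<^sup>2 * (s * (s - 1)) + (- (2 * x * (1 - x))) * (s * (M - s)) + (1 - x)\<^sup>2 * ((M - s) * (M - s - 1))" .
  qed
  also have "Pint M \<alpha> x (\<lambda>s. x\<^sup>2 * (s * (s - 1)) + (- (2 * x * (1 - x))) * (s * (M - s)) + (1 - x)\<^sup>2 * ((M - s) * (M - s - 1))) =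
     x\<^sup>2 * Pint M \<alpha> x (\<lambda>s. s * (s - 1)) + (- (2 * x * (1 - x))) * Pint M \<alpha> x (\<lambda>s. s * (M - s)) + (1 - x)\<^sup>2 * Pint M \<alpha> x (\<lambda>s. (M - s) * (M - s - 1))"
    by (rule lin3[OF cpoly])
  finally show ?thesis .
qed

lemma Pint_nonneg: "(\<And>s. s \<in> {0<..<M} \<Longrightarrow> 0 \<le> g s) \<Longrightarrow> 0 \<le> Pint M \<alpha> x g"
  unfolding Pint_def
proof (intro integral_nonneg_AE AE_I2)
  fix s assume g: "\<And>s. s \<in> {0<..<M} \<Longrightarrow> 0 \<le> g s"
  show "0 \<le> ca M \<alpha> s * (wfn M s x * g s)"
  proof (cases "s \<in> {0<..<M}")
    case True then show ?thesis using g[OF True] ca_nonneg[OF M1 lc, of s] wf_pos[of M s x] by simp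
  qed (simp add: ca_def)
qed

lemma BAC: "Pint M \<alpha> x (\<lambda>s. s * (s - 1)) * Pint M \<alpha> x (\<lambda>s. (M - s) * (M - s - 1)) \<le> (Pint M \<alpha> x (\<lambda>s. s * (M - s)))\<^sup>2"
proof -
  define A where "A = Pint M \<alpha> x (\<lambda>s. s * (s - 1))"
  define B where "B = Pint M \<alpha> x (\<lambda>s. s * (M - s))"
  define C where "C = Pint M \<alpha> x (\<lambda>s. (M - s) * (M - s - 1))"
  define fA where "fA = (\<lambda>s. indicator {1<..<M} s * (ca M \<alpha> s * (wfn M s x * (s * (s - 1)))))"
  define fC where "fC = (\<lambda>s. indicator {0<..<M-1} s * (ca M \<alpha> s * (wfn M s x * ((M - s) * (M - s - 1)))))"
  have pl: "integral\<^sup>L lborel fA * integral\<^sup>L lborel fC \<le> B\<^sup>2"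
    using PLapp(1)[OF M1 lc x] unfolding fA_def fC_def B_def Pint_def .
  have iA: "integrable lborel fA" using PLapp(2)[OF M1 lc x] unfolding fA_def .
  have iC: "integrable lborel fC" using PLapp(3)[OF M1 lc x] unfolding fC_def .
  have AB: "0 \<le> A + B"
  proof -
    have "Pint M \<alpha> x (\<lambda>s. 1 * (s * (s - 1)) + 1 * (s * (M - s)) + 0 * (s * (M - s))) = 1 * A + 1 * B + 0 * B"
      unfolding A_def B_def by (rule lin3[OF cpoly(1) cpoly(2) cpoly(2)])
    then have "A + B = Pint M \<alpha> x (\<lambda>s. 1 * (s * (s - 1)) + 1 * (s * (M - s)) + 0 * (s * (M - s)))" by simp
    also have "\<dots> \<ge> 0" using M1 by (intro Pint_nonneg) (auto simp: algebra_simps intro!: mult_nonneg_nonneg)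
    finally show ?thesis .
  qed
  have BC: "0 \<le> B + C"
  proof -
    have "Pint M \<alpha> x (\<lambda>s. 1 * (s * (M - s)) + 1 * ((M - s) * (M - s - 1)) + 0 * (s * (M - s))) = 1 * B + 1 * C + 0 * B"
      unfolding C_def B_def by (rule lin3[OF cpoly(2) cpoly(3) cpoly(2)])
    then have "B + C = Pint M \<alpha> x (\<lambda>s. 1 * (s * (M - s)) + 1 * ((M - s) * (M - s - 1)) + 0 * (s * (M - s)))" by simp
    also have "\<dots> \<ge> 0"
    proof (intro Pint_nonneg)
      fix s :: real assume s: "s \<in> {0<..<M}"
      have "1 * (s * (M - s)) + 1 * ((M - s) * (M - s - 1)) + 0 * (s * (M - s)) = (M - s) * (M - 1)"
        by (simp add: algebra_simps)
      then show "0 \<le> 1 * (s * (M - s)) + 1 * ((M - s) * (M - s - 1)) + 0 * (s * (M - s))"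
        using s M1 by simp
    qed
    finally show ?thesis .
  qed
  have B0: "0 \<le> B" unfolding B_def by (intro Pint_nonneg) auto
  have AfA: "A \<le> integral\<^sup>L lborel fA"
    unfolding A_def Pint_def
  proof (rule integral_mono[OF intP[OF M1 lc x cpoly(1)] iA])
    fix s
    show "ca M \<alpha> s * (wfn M s x * (s * (s - 1))) \<le> fA s"
    proof (cases "s \<in> {1<..<M}")
      case True then show ?thesis unfolding fA_def by simp
    next
      case False
      show ?thesis
      proof (cases "s \<in> {0<..<M}")
        case True
        then have "s \<le> 1" using False by auto
        then have "s * (s - 1) \<le> 0" using True by (simp add: mult_nonneg_nonpos)
        then have "ca M \<alpha> s * (wfn M s x * (s * (s - 1))) \<le> 0"
          using ca_nonneg[OF M1 lc, of s] wf_pos[of M s x]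
          by (simp add: mult_nonneg_nonpos)
        then show ?thesis unfolding fA_def using False by simp
      qed (simp add: fA_def ca_def)
    qed
  qed
  have CfC: "C \<le> integral\<^sup>L lborel fC"
    unfolding C_def Pint_def
  proof (rule integral_mono[OF intP[OF M1 lc x cpoly(3)] iC])
    fix s
    show "ca M \<alpha> s * (wfn M s x * ((M - s) * (M - s - 1))) \<le> fC s"
    proof (cases "s \<in> {0<..<M-1}")
      case True then show ?thesis unfolding fC_def by simp
    next
      case False
      show ?thesis
      proof (cases "s \<in> {0<..<M}")
        case True
        then have "M - s - 1 \<le> 0" using False by auto
        then have "(M - s) * (M - s - 1) \<le> 0" using True by (simp add: mult_nonneg_nonpos)
        then have "ca M \<alpha> s * (wfn M s x * ((M - s) * (M - s - 1))) \<le> 0"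
          using ca_nonneg[OF M1 lc, of s] wf_pos[of M s x]
          by (simp add: mult_nonneg_nonpos)
        then show ?thesis unfolding fC_def using False by simp
      qed (simp add: fC_def ca_def)
    qed
  qed
  have "A * C \<le> B\<^sup>2"
  proof (cases "0 \<le> A \<and> 0 \<le> C")
    case True
    have "A * C \<le> integral\<^sup>L lborel fA * integral\<^sup>L lborel fC"
      using True AfA CfC by (intro mult_mono) auto
    then show ?thesis using pl by simp
  next
    case False
    show ?thesis
    proof (cases "A < 0 \<and> C < 0")
      case True
      have "A * C = (- A) * (- C)" by simp
      also have "\<dots> \<le> B * B" using True AB BC by (intro mult_mono) auto
      finally show ?thesis by (simp add: power2_eq_square)
    next
      case False2: False
      then have "A * C \<le> 0" using False by (auto simp: mult_le_0_iff)
      then show ?thesis by (smt (verit) zero_le_power2)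
    qed
  qed
  then show ?thesis unfolding A_def B_def C_def .
qed

end


theorem mainTheorem2:
  fixes M :: real and \<alpha> f :: "real \<Rightarrow> real"
  assumes "M > 1"
    and "\<forall>s\<in>{0<..<M}. \<alpha> s \<ge> 0"
    and "log_concave_on {0<..<M} \<alpha>"
    and "\<forall>x\<in>{0<..<1}. f x =
           (LINT s:{0<..<M}|lborel. \<alpha> s * rbinom M s * (1 - x) powr s * x powr (M - s))"
  shows "\<forall>x\<in>{0<..<1}. (M - 1) / M * (deriv f x)\<^sup>2 \<ge> f x * deriv (deriv f) x"
proof
  fix x :: real assume xI: "x \<in> {0<..<1}"
  note M1 = assms(1) and lc = assms(3)
  define F0 where "F0 y = (\<integral>s. ca M \<alpha> s * wfn M s y \<partial>lborel)" for y
  define F1 where "F1 y = (\<integral>s. ca M \<alpha> s * (wfn M s y * Lf M s y) \<partial>lborel)" for y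
  define F2 where "F2 y = (\<integral>s. ca M \<alpha> s * (wfn M s y * Qf M s y) \<partial>lborel)" for y
  have fF: "f y = F0 y" if "y \<in> {0<..<1}" for y
  proof -
    have y': "0 < y" "y < 1" using that by auto
    have "f y = (LINT s:{0<..<M}|lborel. \<alpha> s * rbinom M s * (1 - y) powr s * y powr (M - s))"
      using assms(4) that by blast
    also have "\<dots> = (\<integral>s. ca M \<alpha> s * wfn M s y \<partial>lborel)"
      unfolding set_lebesgue_integral_def
    proof (rule Bochner_Integration.integral_cong[OF refl])
      fix s
      have "\<alpha> s * rbinom M s * (1 - y) powr s * y powr (M - s) = \<alpha> s * rbinom M s * wfn M s y"
        using wf_powr[OF y', of s M] by (simp add: mult.assoc)
      then show "indicator {0<..<M} s *\<^sub>R (\<alpha> s * rbinom M s * (1 - y) powr s * y powr (M - s)) = ca M \<alpha> s * wfn M s y"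
        unfolding ca_def by simp
    qed
    finally show ?thesis unfolding F0_def .
  qed
  have d1: "deriv f y = F1 y" if y: "y \<in> {0<..<1}" for y
  proof -
    have y': "0 < y" "y < 1" using y by auto
    have "(F0 has_real_derivative F1 y) (at y)" unfolding F0_def F1_def using F_deriv(1)[OF M1 lc y'] .
    then have "(f has_real_derivative F1 y) (at y)"
      by (rule has_field_derivative_transform_within_open[where S="{0<..<1}"]) (use y fF in auto)
    then show ?thesis by (rule DERIV_imp_deriv)
  qed
  have x: "0 < x" "x < 1" using xI by auto
  have d2: "deriv (deriv f) x = F2 x"
  proof -
    have "(F1 has_real_derivative F2 x) (at x)" unfolding F1_def F2_def using F_deriv(2)[OF M1 lc x] .
    then have "(deriv f has_real_derivative F2 x) (at x)"
      by (rule has_field_derivative_transform_within_open[where S="{0<..<1}"]) (use xI d1 in auto)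
    then show ?thesis by (rule DERIV_imp_deriv)
  qed
  have P0: "F0 x = Pint M \<alpha> x (\<lambda>s. 1)" unfolding F0_def Pint_def by simp
  have P1: "F1 x = Pint M \<alpha> x (\<lambda>s. Lf M s x)" unfolding F1_def Pint_def ..
  have P2: "F2 x = Pint M \<alpha> x (\<lambda>s. Qf M s x)" unfolding F2_def Pint_def ..
  have "F0 x * F2 x \<le> (M - 1) / M * (F1 x)\<^sup>2"
    unfolding P0 P1 P2
    by (rule final_alg[OF M1 x iden1[OF M1 lc x] iden2[OF M1 lc x] iden3[OF M1 lc x] BAC[OF M1 lc x]])
  then show "(M - 1) / M * (deriv f x)\<^sup>2 \<ge> f x * deriv (deriv f) x"
    using d1[OF xI] d2 fF[OF xI] by simp
qed


end
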